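(* Let $(S,\mathcal B_S,\mu)$ be a standard Lebesgue space with $\sigma$-finite measure $\mu$, and $f,g:S\to[0,\infty)$ measurable with $\int_S f\,d\mu=\int_S g\,d\mu=1$. Let $(X,Y)$ satisfy \[ \mathbb P(X\le x,Y\le y)=\exp\Big\{-\int_S \max\Big(\frac{f(s)}{x},\frac{g(s)}{y}\Big)\mu(ds)\Big\},\qquad x,y>0, \] and let $(X_i,Y_i)$, $i\ge1$, be i.i.d. copies of $(X,Y)$. Let $E_t=\{s: f(s)>t g(s)\}$, $\|f\|_{E_t}=\int_{E_t} f\,d\mu$, $\gamma(t)=\|f\|_{E_t}/t$, and suppose $\mu(E_t)>0$ for all $t\in(0,\infty)$. Suppose $(X,Y)$ has ratio tail index $\alpha$, i.e. $\gamma\in RV_{-\alpha}$ (equivalently $X(u)/Y(u)\in RV_{-\alpha}$ for all $u\ge0$, where $X(u)=\max(X,u)$, $Y(u)=\max(Y,u)$). Then: (i) $\alpha=1$ if and only if $t\mapsto\|f\|_{E_t}$ is slowly varying; (ii) for all $u\ge0$ and all sequences $\kappa_n\sim(1/\gamma)^{\leftarrow}(Cn)$ with $C=1-\exp(-u^{-1})$, \[ \frac1{\kappa_n}\max_{1\le i\le n}\frac{X_i(u)}{Y_i(u)}\Rightarrow\zeta_\alpha, \] where $\zeta_\alpha$ is a standard $\alpha$-Fréchet random variable; (iii) for any sequence $u_n$ with $u_n=o(n)$, the convergence in (ii) holds with $u$ replaced by $u_n$ and with $\kappa_n\sim(1/\gamma)^{\leftarrow}(n/u_n)$.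
   Context: $RV_{-\rho}$: $U(tx)/U(t)\to x^{-\rho}$ for all $x>0$; slowly varying means $RV_0$. For nondecreasing $U$, $U^{\leftarrow}(y)=\inf\{s:U(s)\ge y\}$. A standard $\alpha$-Fréchet variable has $\mathbb P(\zeta_\alpha\le t)=\exp(-t^{-\alpha})$, $t>0$. $\Rightarrow$ denotes convergence in distribution; $a_n\sim b_n$ means $a_n/b_n\to1$; convention $1/0=\infty$, $\exp(-1/0)=0$.
   Formalization: In (iii) the sequence $u_n$ is also positive and tends to infinity, besides $u_n=o(n)$. Apart from conventions, each condition added here is assumed in the paper as well or is needed for the statement above to hold. *)

theory Defs
  imports "HOL-Probability.Probability" "HOL-Library.Landau_Symbols"
begin

definition regularly_varying :: "real \<Rightarrow> (real \<Rightarrow> real) \<Rightarrow> bool" where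
  "regularly_varying \<rho> U \<longleftrightarrow> (\<forall>x>0. ((\<lambda>t. U (t * x) / U t) \<longlongrightarrow> x powr \<rho>) at_top)"

definition slowly_varying :: "(real \<Rightarrow> real) \<Rightarrow> bool" where
  "slowly_varying U \<longleftrightarrow> regularly_varying 0 U"

definition gen_inv :: "(real \<Rightarrow> real) \<Rightarrow> real \<Rightarrow> real" where
  "gen_inv U y = Inf {s. 0 < s \<and> y \<le> U s}"

definition frechet_cdf :: "real \<Rightarrow> real \<Rightarrow> real" where
  "frechet_cdf \<alpha> t = (if 0 < t then exp (- (t powr (- \<alpha>))) else 0)"

definition Eset :: "'s measure \<Rightarrow> ('s \<Rightarrow> real) \<Rightarrow> ('s \<Rightarrow> real) \<Rightarrow> real \<Rightarrow> 's set" where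
  "Eset M f g t = {s \<in> space M. t * g s < f s}"

definition normE :: "'s measure \<Rightarrow> ('s \<Rightarrow> real) \<Rightarrow> ('s \<Rightarrow> real) \<Rightarrow> real \<Rightarrow> real" where
  "normE M f g t = set_lebesgue_integral M (Eset M f g t) f"

definition gam :: "'s measure \<Rightarrow> ('s \<Rightarrow> real) \<Rightarrow> ('s \<Rightarrow> real) \<Rightarrow> real \<Rightarrow> real" where
  "gam M f g t = normE M f g t / t"

text \<open>The constant C = 1 - exp(-1/u), with the convention 1/0 = infinity, exp(-infinity) = 0.\<close>
definition Cconst :: "real \<Rightarrow> real" where
  "Cconst u = (if u = 0 then 1 else 1 - exp (- (1 / u)))"

definition max_ratio :: "(nat \<Rightarrow> 'w \<Rightarrow> real) \<Rightarrow> (nat \<Rightarrow> 'w \<Rightarrow> real) \<Rightarrow> real \<Rightarrow> nat \<Rightarrow> 'w \<Rightarrow> real" where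
  "max_ratio X Y u n \<omega> = Max ((\<lambda>i. max (X i \<omega>) u / max (Y i \<omega>) u) ` {1..n})"

end

theory Submission
  imports Defs
begin

locale fg =
  fixes M :: "'s measure" and f g :: "'s \<Rightarrow> real"
  assumes fm[measurable]: "f \<in> borel_measurable M" and gm[measurable]: "g \<in> borel_measurable M"
    and fnn: "\<forall>s\<in>space M. 0 \<le> f s" and gnn: "\<forall>s\<in>space M. 0 \<le> g s"
    and fint: "integrable M f" and gint: "integrable M g"
    and f1: "integral\<^sup>L M f = 1" and g1: "integral\<^sup>L M g = 1"
    and Epos: "\<forall>t>0. 0 < emeasure M (Eset M f g t)"
begin

abbreviation "N \<equiv> normE M f g"

lemma Eset_sets[measurable]: "Eset M f g t \<in> sets M"
  unfolding Eset_def by measurable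

lemma N_eq: "N t = (\<integral>s. indicator (Eset M f g t) s * f s \<partial>M)"
  unfolding normE_def set_lebesgue_integral_def by simp

lemma int_ind: "integrable M (\<lambda>s. indicator (Eset M f g t) s * f s)"
  using integrable_mult_indicator[OF Eset_sets fint] by simp

lemma N_le1: "N t \<le> 1"
proof -
  have "N t \<le> integral\<^sup>L M f" unfolding N_eq
    by (rule integral_mono[OF int_ind fint]) (use fnn in \<open>auto simp: indicator_def\<close>)
  then show ?thesis using f1 by simp
qed

lemma N_antimono: assumes "0 \<le> t" "t \<le> t'" shows "N t' \<le> N t"
  unfolding N_eq
proof (rule integral_mono[OF int_ind int_ind])
  fix s assume s: "s \<in> space M"
  have "s \<in> Eset M f g t' \<Longrightarrow> s \<in> Eset M f g t"
    using s assms gnn mult_right_mono[of t t' "g s"] by (auto simp: Eset_def)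
  then show "indicator (Eset M f g t') s * f s \<le> indicator (Eset M f g t) s * f s"
    using fnn s by (auto simp: indicator_def)
qed

lemma N_pos: assumes "0 < t" shows "0 < N t"
proof -
  have nn: "AE s in M. 0 \<le> indicator (Eset M f g t) s * f s"
    using fnn by (auto simp: indicator_def)
  have "N t \<noteq> 0"
  proof
    assume "N t = 0"
    then have "AE s in M. indicator (Eset M f g t) s * f s = 0"
      using integral_nonneg_eq_0_iff_AE[OF int_ind nn] unfolding N_eq by simp
    then have "AE s in M. s \<notin> Eset M f g t"
    proof (rule AE_mp[OF _ AE_I2], intro impI)
      fix s assume "s \<in> space M" "indicator (Eset M f g t) s * f s = 0"
      then show "s \<notin> Eset M f g t" using gnn assms
        by (auto simp: Eset_def indicator_def) (smt (verit, best) mult_nonneg_nonneg)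
    qed
    then have "emeasure M (Eset M f g t) = 0"
      using AE_iff_measurable[OF Eset_sets, of "\<lambda>s. s \<notin> Eset M f g t"]
      by (auto simp: Eset_def)
    with Epos assms show False by auto
  qed
  moreover have "0 \<le> N t" unfolding N_eq by (rule integral_nonneg_AE[OF nn])
  ultimately show ?thesis by simp
qed

end

context fg begin

definition B :: "real \<Rightarrow> real \<Rightarrow> real" where
  "B x b = (\<integral>s. max (f s / b) (x * g s) \<partial>M)"

lemma B_int: "integrable M (\<lambda>s. max (f s / b) (x * g s))"
  using fint gint by auto

lemma B_int1: "integrable M (\<lambda>s. max (f s) (x * g s))"
  using fint gint by auto

lemma B_bounds: assumes "0 \<le> x" shows "x \<le> B x 1" "B x 1 \<le> x + 1"
proof -
  have "integral\<^sup>L M (\<lambda>s. x * g s) \<le> B x 1" unfolding B_def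
    by (rule integral_mono) (use gint B_int1 in auto)
  then show "x \<le> B x 1" using g1 by simp
  have "B x 1 \<le> integral\<^sup>L M (\<lambda>s. f s + x * g s)" unfolding B_def
    by (rule integral_mono) (use gint fint B_int1 fnn gnn assms in auto)
  then show "B x 1 \<le> x + 1" using g1 f1 fint gint by simp
qed

lemma Bdiff1: assumes "0 < x" "1 < a" shows "(1 - 1/a) * N (a * x) \<le> B x 1 - B x a"
proof -
  have "(1 - 1/a) * N (a * x) = (\<integral>s. (1 - 1/a) * (indicator (Eset M f g (a*x)) s * f s) \<partial>M)"
    unfolding N_eq by simp
  also have "\<dots> \<le> (\<integral>s. max (f s / 1) (x * g s) - max (f s / a) (x * g s) \<partial>M)"
  proof (rule integral_mono)
    show "integrable M (\<lambda>s. (1 - 1/a) * (indicator (Eset M f g (a*x)) s * f s))"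
      using int_ind by auto
    show "integrable M (\<lambda>s. max (f s / 1) (x * g s) - max (f s / a) (x * g s))"
      using B_int[of 1] B_int by (intro Bochner_Integration.integrable_diff)
    fix s assume s: "s \<in> space M"
    have fs: "0 \<le> f s" "0 \<le> g s" using fnn gnn s by auto
    show "(1 - 1/a) * (indicator (Eset M f g (a*x)) s * f s) \<le> max (f s / 1) (x * g s) - max (f s / a) (x * g s)"
    proof (cases "s \<in> Eset M f g (a*x)")
      case True
      then have "a * x * g s < f s" by (simp add: Eset_def)
      then have "x * g s < f s / a" using assms by (simp add: field_simps)
      moreover have "f s / a \<le> f s" using fs assms by (simp add: divide_le_eq mult_le_cancel_left1)
      ultimately show ?thesis using True by (simp add: algebra_simps max_def)
    next
      case False
      have "f s / a \<le> f s" using fs assms by (simp add: divide_le_eq mult_le_cancel_left1)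
      then show ?thesis using False by (simp add: max_def)
    qed
  qed
  also have "\<dots> = B x 1 - B x a" unfolding B_def by (rule Bochner_Integration.integral_diff[OF B_int B_int])
  finally show ?thesis .
qed

lemma Bdiff2: assumes "0 < x" "1 < a" shows "B x (1/a) - B x 1 \<le> (a - 1) * N (x / a)"
proof -
  have "B x (1/a) - B x 1 = (\<integral>s. max (f s / (1/a)) (x * g s) - max (f s / 1) (x * g s) \<partial>M)"
    unfolding B_def by (rule Bochner_Integration.integral_diff[symmetric, OF B_int B_int])
  also have "\<dots> \<le> (\<integral>s. (a - 1) * (indicator (Eset M f g (x/a)) s * f s) \<partial>M)"
  proof (rule integral_mono)
    show "integrable M (\<lambda>s. (a - 1) * (indicator (Eset M f g (x/a)) s * f s))"
      using int_ind by auto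
    show "integrable M (\<lambda>s. max (f s / (1/a)) (x * g s) - max (f s / 1) (x * g s))"
      using B_int[of 1] B_int by (intro Bochner_Integration.integrable_diff)
    fix s assume s: "s \<in> space M"
    have fs: "0 \<le> f s" "0 \<le> g s" using fnn gnn s by auto
    show "max (f s / (1/a)) (x * g s) - max (f s / 1) (x * g s) \<le> (a - 1) * (indicator (Eset M f g (x/a)) s * f s)"
    proof (cases "s \<in> Eset M f g (x/a)")
      case True
      then have "x * g s < a * f s" using assms by (simp add: Eset_def field_simps)
      then show ?thesis using True fs assms by (simp add: algebra_simps max_def)
    next
      case False
      then have "a * f s \<le> x * g s" using assms s by (simp add: Eset_def field_simps)
      then show ?thesis using False by (simp add: max_def mult.commute)
    qed
  qed
  also have "\<dots> = (a - 1) * N (x / a)" unfolding N_eq by simp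
  finally show ?thesis .
qed

lemma V_hom: assumes "0 < v" "0 < b" "0 < y"
  shows "(\<integral>s. max (f s / (b * v)) (g s / (v / y)) \<partial>M) = B y b / v"
proof -
  have "\<And>s. max (f s / (b * v)) (g s / (v / y)) = max (f s / b) (y * g s) / v"
    using assms by (simp add: max_def field_simps divide_le_eq le_divide_eq)
  then show ?thesis unfolding B_def by simp
qed

end

lemma e1: fixes p q a t :: real
  assumes "p \<le> q" "0 < q" "1 < a" "0 \<le> t"
  shows "((q-p)/((a-1)*q)) * (exp(-q*t) - exp(-(a*q)*t)) \<le> exp(-p*t) - exp(-q*t)"
proof -
  have 1: "(q-p)*t*exp(-q*t) \<le> exp(-p*t) - exp(-q*t)"
  proof -
    have "1 + (q-p)*t \<le> exp((q-p)*t)" by (rule exp_ge_add_one_self)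
    then have "exp(-q*t) * (1 + (q-p)*t) \<le> exp(-q*t) * exp((q-p)*t)" by simp
    also have "exp(-q*t) * exp((q-p)*t) = exp(-p*t)" by (simp add: exp_add[symmetric] algebra_simps)
    finally show ?thesis by (simp add: algebra_simps)
  qed
  have 2: "exp(-q*t) - exp(-(a*q)*t) \<le> (a-1)*q*t*exp(-q*t)"
  proof -
    have "1 + (-((a-1)*q*t)) \<le> exp(-((a-1)*q*t))" by (rule exp_ge_add_one_self)
    then have "1 - exp(-((a-1)*q*t)) \<le> (a-1)*q*t" by linarith
    then have "exp(-q*t) * (1 - exp(-((a-1)*q*t))) \<le> exp(-q*t) * ((a-1)*q*t)" by (rule mult_left_mono) simp
    moreover have "exp(-q*t) * exp(-((a-1)*q*t)) = exp(-(a*q)*t)" by (simp add: exp_add[symmetric] algebra_simps)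
    ultimately show ?thesis by (simp add: algebra_simps)
  qed
  have K: "0 \<le> (q-p)/((a-1)*q)" using assms by simp
  have "((q-p)/((a-1)*q)) * (exp(-q*t) - exp(-(a*q)*t)) \<le> ((q-p)/((a-1)*q)) * ((a-1)*q*t*exp(-q*t))"
    by (rule mult_left_mono[OF 2 K])
  also have "\<dots> = (q-p)*t*exp(-q*t)" using assms by simp
  finally show ?thesis using 1 by linarith
qed

lemma e2: fixes p q a t :: real
  assumes "p \<le> q" "0 < p" "1 < a" "0 \<le> t"
  shows "exp(-p*t) - exp(-q*t) \<le> ((q-p)/(p*(1-1/a))) * (exp(-(p/a)*t) - exp(-p*t))"
proof -
  have 1: "exp(-p*t) - exp(-q*t) \<le> (q-p)*t*exp(-p*t)"
  proof -
    have "1 + (-((q-p)*t)) \<le> exp(-((q-p)*t))" by (rule exp_ge_add_one_self)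
    then have "1 - exp(-((q-p)*t)) \<le> (q-p)*t" by linarith
    then have "exp(-p*t) * (1 - exp(-((q-p)*t))) \<le> exp(-p*t) * ((q-p)*t)" by (rule mult_left_mono) simp
    moreover have "exp(-p*t) * exp(-((q-p)*t)) = exp(-q*t)" by (simp add: exp_add[symmetric] algebra_simps)
    ultimately show ?thesis by (simp add: algebra_simps)
  qed
  have 2: "(p - p/a)*t*exp(-p*t) \<le> exp(-(p/a)*t) - exp(-p*t)"
  proof -
    have "1 + (p - p/a)*t \<le> exp((p-p/a)*t)" by (rule exp_ge_add_one_self)
    then have "exp(-p*t) * (1 + (p-p/a)*t) \<le> exp(-p*t) * exp((p-p/a)*t)" by simp
    also have "exp(-p*t) * exp((p-p/a)*t) = exp(-(p/a)*t)" by (simp add: exp_add[symmetric] algebra_simps)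
    finally show ?thesis by (simp add: algebra_simps)
  qed
  have K: "0 \<le> (q-p)/(p*(1-1/a))" using assms by (simp add: divide_nonneg_pos)
  have "(q-p)*t*exp(-p*t) = ((q-p)/(p*(1-1/a))) * ((p - p/a)*t*exp(-p*t))"
    using assms by (simp add: field_simps)
  also have "\<dots> \<le> ((q-p)/(p*(1-1/a))) * (exp(-(p/a)*t) - exp(-p*t))"
    by (rule mult_left_mono[OF 2 K])
  finally show ?thesis using 1 by linarith
qed

lemma tel: fixes a w c :: real
  assumes "1 < a" "0 < w"
  shows "(\<lambda>k. exp (-c/(w*a^Suc k)) - exp (-c/(w*a^k))) sums (1 - exp (-c/w))"
proof -
  have na: "norm (1/a) < 1" using assms by simp
  have "(\<lambda>k. (1/a)^k) \<longlonglongrightarrow> 0" by (rule LIMSEQ_power_zero[OF na])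
  then have "(\<lambda>k. (c/w) * (1/a)^k) \<longlonglongrightarrow> (c/w) * 0"
    by (intro tendsto_mult tendsto_const)
  then have "(\<lambda>k. exp (-((c/w) * (1/a)^k))) \<longlonglongrightarrow> exp (- ((c/w) * 0))"
    by (intro tendsto_exp tendsto_minus)
  moreover have "\<And>k. -((c/w) * (1/a)^k) = -c/(w*a^k)" by (simp add: power_one_over field_simps)
  ultimately have "(\<lambda>k. exp (-c/(w*a^k))) \<longlonglongrightarrow> 1" by simp
  from telescope_sums[OF this] show ?thesis by simp
qed

lemma pow_bracket: fixes a r :: real assumes "1 < a" "1 < r"
  shows "\<exists>k. a^k < r \<and> r \<le> a^Suc k"
proof -
  obtain n where n: "r < a^n" using real_arch_pow[OF assms(1)] by blast
  define m where "m = (LEAST n. r \<le> a^n)"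
  have m: "r \<le> a^m" unfolding m_def by (rule LeastI[of _ n]) (use n in auto)
  have "m \<noteq> 0"
  proof
    assume "m = 0" with m assms show False by simp
  qed
  then obtain k where k: "m = Suc k" by (cases m) auto
  have "\<not> r \<le> a^k" using not_less_Least[of k "\<lambda>n. r \<le> a^n"] k m_def by auto
  then show ?thesis using m k by (intro exI[of _ k]) auto
qed

lemma vmono: fixes a c :: real assumes "1 \<le> a" "0 \<le> c" "m < n"
  shows "a * (c * a^m) \<le> c * a^n"
proof -
  have "a^Suc m \<le> a^n" using assms by (intro power_increasing) auto
  then have "c * a^Suc m \<le> c * a^n" using assms(2) by (rule mult_left_mono)
  then show ?thesis by (simp add: algebra_simps)
qed

lemma disj_stair: fixes a c :: real and Z :: "'w \<Rightarrow> real"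
  assumes "1 \<le> a" "0 \<le> c"
  shows "disjoint_family (\<lambda>k. {\<omega> \<in> S. c*a^k < Z \<omega> \<and> Z \<omega> \<le> a * (c*a^k) \<and> Q k \<omega>})"
  unfolding disjoint_family_on_def
proof (intro ballI impI)
  fix m n :: nat assume "m \<noteq> n"
  then consider "m < n" | "n < m" by linarith
  then show "{\<omega> \<in> S. c*a^m < Z \<omega> \<and> Z \<omega> \<le> a * (c*a^m) \<and> Q m \<omega>} \<inter> {\<omega> \<in> S. c*a^n < Z \<omega> \<and> Z \<omega> \<le> a * (c*a^n) \<and> Q n \<omega>} = {}"
  proof cases
    case 1 then show ?thesis using vmono[OF assms 1] by auto
  next
    case 2 then show ?thesis using vmono[OF assms 2] by auto
  qed
qed

locale pr = fg +
  fixes P :: "'w measure" and X0 Y0 :: "'w \<Rightarrow> real"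
  assumes P: "prob_space P"
    and Xm[measurable]: "X0 \<in> borel_measurable P" and Ym[measurable]: "Y0 \<in> borel_measurable P"
    and cdf: "\<forall>x y. 0 < x \<longrightarrow> 0 < y \<longrightarrow>
           measure P {\<omega> \<in> space P. X0 \<omega> \<le> x \<and> Y0 \<omega> \<le> y}
             = exp (- integral\<^sup>L M (\<lambda>s. max (f s / x) (g s / y)))"
begin

interpretation P: prob_space P by (rule P)

definition Fc :: "real \<Rightarrow> real \<Rightarrow> real" where
  "Fc x y = measure P {\<omega> \<in> space P. X0 \<omega> \<le> x \<and> Y0 \<omega> \<le> y}"

lemma F_val: assumes "0 < v" "0 < b" "0 < x" shows "Fc (b* v) (v/x) = exp (- (B x b / v))"
  using cdf assms V_hom[OF assms] unfolding Fc_def by simp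

lemma rect: assumes "v \<le> w"
  shows "measure P {\<omega> \<in> space P. v < X0 \<omega> \<and> X0 \<omega> \<le> w \<and> Y0 \<omega> \<le> c} = Fc w c - Fc v c"
proof -
  have "{\<omega> \<in> space P. v < X0 \<omega> \<and> X0 \<omega> \<le> w \<and> Y0 \<omega> \<le> c} =
     {\<omega> \<in> space P. X0 \<omega> \<le> w \<and> Y0 \<omega> \<le> c} - {\<omega> \<in> space P. X0 \<omega> \<le> v \<and> Y0 \<omega> \<le> c}"
    using assms by auto
  also have "measure P \<dots> = Fc w c - Fc v c" unfolding Fc_def
    by (rule P.finite_measure_Diff) (use assms in auto)
  finally show ?thesis .
qed

lemma lowerE: assumes u: "0 < u" and x: "1 < x" and a: "1 < a"
  shows "N (a*x) / (a * B x 1) * (1 - exp (-(a * B x 1)/(x*u)))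
     \<le> measure P {\<omega> \<in> space P. x < max (X0 \<omega>) u / max (Y0 \<omega>) u}"
proof -
  define q where "q = B x 1"
  define p where "p = B x a"
  define v where "v k = x*u*a^k" for k :: nat
  have vpos: "0 < v k" for k using u x a unfolding v_def by simp
  have q: "x \<le> q" using B_bounds[of x] x unfolding q_def by auto
  have qp: "(1 - 1/a) * N (a * x) \<le> q - p" using Bdiff1[of x a] x a unfolding q_def p_def by auto
  have Npos: "0 \<le> N (a*x)" using N_pos[of "a*x"] x a by simp
  have pq: "p \<le> q" using qp Npos a by (smt (verit) divide_less_eq_1_pos mult_nonneg_nonneg)
  define Bk where "Bk k = {\<omega> \<in> space P. v k < X0 \<omega> \<and> X0 \<omega> \<le> a * v k \<and> Y0 \<omega> \<le> v k / x}" for k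
  have Bk_sets: "range Bk \<subseteq> sets P" unfolding Bk_def by auto
  have disj: "disjoint_family Bk" unfolding Bk_def v_def
    using disj_stair[of a "x*u" "space P" X0 "\<lambda>k \<omega>. Y0 \<omega> \<le> x*u*a^k / x"] a u x
    by (simp add: mult.assoc)
  have meas: "measure P (Bk k) = exp (- (p / v k)) - exp (- (q / v k))" for k
  proof -
    have "measure P (Bk k) = Fc (a * v k) (v k / x) - Fc (1 * v k) (v k / x)"
      unfolding Bk_def using rect[of "v k" "a * v k" "v k / x"] vpos[of k] a by simp
    also have "\<dots> = exp (- (p / v k)) - exp (- (q / v k))"
      using F_val[of "v k" a x] F_val[of "v k" 1 x] vpos[of k] a x unfolding p_def q_def by simp
    finally show ?thesis .
  qed
  define K where "K = (q-p)/((a-1)*q)"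
  define h where "h k = exp (-(a*q)/((x*u)*a^k))" for k :: nat
  have termw: "K * (h (Suc k) - h k) \<le> measure P (Bk k)" for k
  proof -
    have "K * (exp(-q*(1/v k)) - exp(-(a*q)*(1/v k))) \<le> exp(-p*(1/v k)) - exp(-q*(1/v k))"
      unfolding K_def by (rule e1) (use pq q x a vpos[of k] in auto)
    moreover have "h (Suc k) = exp(-q*(1/v k))" unfolding h_def v_def using a x u
      by (simp add: field_simps)
    moreover have "h k = exp(-(a*q)*(1/v k))" unfolding h_def v_def using a x u
      by (simp add: field_simps)
    ultimately show ?thesis using meas[of k] by simp
  qed
  have tsum: "(\<lambda>k. K * (h (Suc k) - h k)) sums (K * (1 - exp (-(a*q)/(x*u))))"
    unfolding h_def by (intro sums_mult tel) (use a x u in auto)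
  have "K * (1 - exp (-(a*q)/(x*u))) \<le> measure P (\<Union>k. Bk k)"
    by (rule sums_le[OF _ tsum P.finite_measure_UNION[OF Bk_sets disj]]) (use termw in auto)
  also have "\<dots> \<le> measure P {\<omega> \<in> space P. x < max (X0 \<omega>) u / max (Y0 \<omega>) u}"
  proof (rule P.finite_measure_mono)
    show "{\<omega> \<in> space P. x < max (X0 \<omega>) u / max (Y0 \<omega>) u} \<in> sets P" by measurable
    show "(\<Union>k. Bk k) \<subseteq> {\<omega> \<in> space P. x < max (X0 \<omega>) u / max (Y0 \<omega>) u}"
    proof
      fix \<omega> assume "\<omega> \<in> (\<Union>k. Bk k)"
      then obtain k where k: "\<omega> \<in> space P" "v k < X0 \<omega>" "Y0 \<omega> \<le> v k / x" unfolding Bk_def by auto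
      have "x*u \<le> v k" unfolding v_def using a x u by simp
      then have X: "x * u < X0 \<omega>" using k by simp
      have Y: "x * Y0 \<omega> < X0 \<omega>" using k x by (simp add: field_simps)
      have mu: "0 < max (Y0 \<omega>) u" using u by simp
      have "x * max (Y0 \<omega>) u < max (X0 \<omega>) u" using X Y by (auto simp: max_def)
      then show "\<omega> \<in> {\<omega> \<in> space P. x < max (X0 \<omega>) u / max (Y0 \<omega>) u}"
        using k mu by (simp add: field_simps)
    qed
  qed
  finally have main: "K * (1 - exp (-(a*q)/(x*u))) \<le> measure P {\<omega> \<in> space P. x < max (X0 \<omega>) u / max (Y0 \<omega>) u}" .
  have "N (a*x) / (a * q) \<le> K"
  proof -
    have "N (a*x) / (a*q) = ((1 - 1/a) * N (a*x)) / ((a-1)*q)" using a q x by (simp add: field_simps)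
    also have "\<dots> \<le> K" unfolding K_def using qp a q x by (intro divide_right_mono) auto
    finally show ?thesis .
  qed
  moreover have "0 \<le> 1 - exp (-(a*q)/(x*u))" using a q x u by simp
  ultimately have "N (a*x) / (a * q) * (1 - exp (-(a*q)/(x*u))) \<le> K * (1 - exp (-(a*q)/(x*u)))"
    by (rule mult_right_mono)
  with main show ?thesis unfolding q_def by simp
qed

lemma B_mono: assumes "1 \<le> a" shows "B x 1 \<le> B x (1/a)"
  unfolding B_def
proof (rule integral_mono[OF B_int B_int])
  fix s assume "s \<in> space M"
  then have "0 \<le> f s" using fnn by auto
  then have "f s \<le> f s * a" using assms by (simp add: mult_le_cancel_left1)
  then show "max (f s / 1) (x * g s) \<le> max (f s / (1/a)) (x * g s)" by auto
qed

lemma upperE: assumes u: "0 < u" and x: "1 < x" and a: "1 < a"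
  shows "measure P {\<omega> \<in> space P. x < max (X0 \<omega>) u / max (Y0 \<omega>) u}
     \<le> a * N (x/a) / B x 1 * (1 - exp (-(B x 1 / a)/(x*u)))"
proof -
  define q where "q = B x 1"
  define q2 where "q2 = B x (1/a)"
  define v where "v k = x*u*a^k" for k :: nat
  have vpos: "0 < v k" for k using u x a unfolding v_def by simp
  have q: "x \<le> q" using B_bounds[of x] x unfolding q_def by auto
  have qq: "q2 - q \<le> (a - 1) * N (x / a)" using Bdiff2[of x a] x a unfolding q_def q2_def by auto
  have pq: "q \<le> q2" using B_mono[of a x] a unfolding q_def q2_def by simp
  define Bk where "Bk k = {\<omega> \<in> space P. v k < X0 \<omega> \<and> X0 \<omega> \<le> a * v k \<and> Y0 \<omega> \<le> a * v k / x}" for k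
  have Bk_sets: "range Bk \<subseteq> sets P" unfolding Bk_def by auto
  have disj: "disjoint_family Bk" unfolding Bk_def v_def
    using disj_stair[of a "x*u" "space P" X0 "\<lambda>k \<omega>. Y0 \<omega> \<le> a * (x*u*a^k) / x"] a u x
    by (simp add: mult.assoc)
  have meas: "measure P (Bk k) = exp (- (q / (a * v k))) - exp (- (q2 / (a * v k)))" for k
  proof -
    have "measure P (Bk k) = Fc (1 * (a * v k)) ((a * v k) / x) - Fc ((1/a) * (a * v k)) ((a * v k) / x)"
      unfolding Bk_def using rect[of "v k" "a * v k" "a * v k / x"] vpos[of k] a by simp
    also have "\<dots> = exp (- (q / (a * v k))) - exp (- (q2 / (a * v k)))"
      using F_val[of "a * v k" 1 x] F_val[of "a * v k" "1/a" x] vpos[of k] a x unfolding q2_def q_def by simp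
    finally show ?thesis .
  qed
  define K where "K = (q2-q)/(q*(1-1/a))"
  define h where "h k = exp (-(q/a)/((x*u)*a^k))" for k :: nat
  have termw: "measure P (Bk k) \<le> K * (h (Suc k) - h k)" for k
  proof -
    have "exp(-q*(1/(a * v k))) - exp(-q2*(1/(a * v k))) \<le> K * (exp(-(q/a)*(1/(a * v k))) - exp(-q*(1/(a * v k))))"
      unfolding K_def by (rule e2) (use pq q x a vpos[of k] in auto)
    moreover have "h (Suc k) = exp(-(q/a)*(1/(a * v k)))" unfolding h_def v_def using a x u
      by (simp add: field_simps)
    moreover have "h k = exp(-q*(1/(a * v k)))" unfolding h_def v_def using a x u
      by (simp add: field_simps)
    ultimately show ?thesis using meas[of k] by simp
  qed
  have tsum: "(\<lambda>k. K * (h (Suc k) - h k)) sums (K * (1 - exp (-(q/a)/(x*u))))"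
    unfolding h_def by (intro sums_mult tel) (use a x u in auto)
  have "measure P {\<omega> \<in> space P. x < max (X0 \<omega>) u / max (Y0 \<omega>) u} \<le> measure P (\<Union>k. Bk k)"
  proof (rule P.finite_measure_mono)
    show "(\<Union>k. Bk k) \<in> sets P" using Bk_sets by auto
    show "{\<omega> \<in> space P. x < max (X0 \<omega>) u / max (Y0 \<omega>) u} \<subseteq> (\<Union>k. Bk k)"
    proof
      fix \<omega> assume w: "\<omega> \<in> {\<omega> \<in> space P. x < max (X0 \<omega>) u / max (Y0 \<omega>) u}"
      have mu: "0 < max (Y0 \<omega>) u" using u by simp
      have lt: "x * max (Y0 \<omega>) u < max (X0 \<omega>) u" using w mu by (simp add: field_simps)
      have "x * u \<le> x * max (Y0 \<omega>) u" using x by simp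
      moreover have "u < x * u" using x u by simp
      ultimately have X: "x * u < X0 \<omega>" using lt by (auto simp: max_def split: if_splits)
      have "x * Y0 \<omega> \<le> x * max (Y0 \<omega>) u" using x by (intro mult_left_mono) auto
      moreover have "max (X0 \<omega>) u = X0 \<omega>" using X \<open>u < x * u\<close> by (simp add: max_def)
      ultimately have Y: "x * Y0 \<omega> < X0 \<omega>" using lt by linarith
      obtain k where k: "a^k < X0 \<omega> / (x*u)" "X0 \<omega> / (x*u) \<le> a^Suc k"
        using pow_bracket[of a "X0 \<omega> / (x*u)"] a X x u by auto
      have k1: "v k < X0 \<omega>" using k(1) x u unfolding v_def by (simp add: field_simps)
      have k2: "X0 \<omega> \<le> a * v k" using k(2) x u unfolding v_def by (simp add: field_simps)
      have "Y0 \<omega> \<le> a * v k / x" using Y k2 x by (simp add: field_simps)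
      then show "\<omega> \<in> (\<Union>k. Bk k)" using w k1 k2 unfolding Bk_def by auto
    qed
  qed
  also have "measure P (\<Union>k. Bk k) \<le> K * (1 - exp (-(q/a)/(x*u)))"
    by (rule sums_le[OF _ P.finite_measure_UNION[OF Bk_sets disj] tsum]) (use termw in auto)
  also have "\<dots> \<le> a * N (x/a) / q * (1 - exp (-(q/a)/(x*u)))"
  proof (rule mult_right_mono)
    have "K \<le> ((a - 1) * N (x / a)) / (q*(1-1/a))" unfolding K_def using qq a q x
      by (intro divide_right_mono) auto
    also have "\<dots> = a * N (x/a) / q" using a q x by (simp add: field_simps)
    finally show "K \<le> a * N (x/a) / q" .
    show "0 \<le> 1 - exp (-(q/a)/(x*u))" using a q x u by simp
  qed
  finally show ?thesis unfolding q_def .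
qed

end

definition Phi :: "real \<Rightarrow> real \<Rightarrow> real" where
  "Phi u c = (if u = 0 then 1 else 1 - exp (- (c / u)))"

context pr begin

interpretation P: prob_space P by (rule P)

lemma V_ge: assumes "0 < x" "0 < y"
  shows "1/x \<le> (\<integral>s. max (f s / x) (g s / y) \<partial>M)" "1/y \<le> (\<integral>s. max (f s / x) (g s / y) \<partial>M)"
proof -
  have int: "integrable M (\<lambda>s. max (f s / x) (g s / y))" using fint gint by auto
  have "(\<integral>s. f s / x \<partial>M) \<le> (\<integral>s. max (f s / x) (g s / y) \<partial>M)"
    by (rule integral_mono[OF _ int]) (use fint in auto)
  then show "1/x \<le> (\<integral>s. max (f s / x) (g s / y) \<partial>M)" using f1 by simp
  have "(\<integral>s. g s / y \<partial>M) \<le> (\<integral>s. max (f s / x) (g s / y) \<partial>M)"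
    by (rule integral_mono[OF _ int]) (use gint in auto)
  then show "1/y \<le> (\<integral>s. max (f s / x) (g s / y) \<partial>M)" using g1 by simp
qed

lemma PX_le: assumes c: "0 < c" shows "measure P {\<omega> \<in> space P. X0 \<omega> \<le> c} \<le> exp (- (1/c))"
proof -
  define A where "A n = {\<omega> \<in> space P. X0 \<omega> \<le> c \<and> Y0 \<omega> \<le> real (Suc n)}" for n
  have "(\<lambda>n. measure P (A n)) \<longlonglongrightarrow> measure P (\<Union>n. A n)"
    by (rule P.finite_Lim_measure_incseq) (auto simp: A_def incseq_def)
  moreover have "(\<Union>n. A n) = {\<omega> \<in> space P. X0 \<omega> \<le> c}"
  proof (intro equalityI subsetI)
    fix \<omega> assume "\<omega> \<in> (\<Union>n. A n)" then show "\<omega> \<in> {\<omega> \<in> space P. X0 \<omega> \<le> c}" by (auto simp: A_def)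
  next
    fix \<omega> assume w: "\<omega> \<in> {\<omega> \<in> space P. X0 \<omega> \<le> c}"
    have "Y0 \<omega> \<le> real (Suc (nat \<lceil>Y0 \<omega>\<rceil>))" using real_nat_ceiling_ge[of "Y0 \<omega>"] by linarith
    then show "\<omega> \<in> (\<Union>n. A n)" using w by (auto simp: A_def)
  qed
  moreover have "measure P (A n) \<le> exp (- (1/c))" for n
  proof -
    have "measure P (A n) = exp (- (\<integral>s. max (f s / c) (g s / real (Suc n)) \<partial>M))"
      unfolding A_def using cdf c by auto
    also have "\<dots> \<le> exp (- (1/c))" using V_ge(1)[of c "real (Suc n)"] c by simp
    finally show ?thesis .
  qed
  ultimately show ?thesis by (metis LIMSEQ_le_const2)
qed

lemma PY_le: assumes c: "0 < c" shows "measure P {\<omega> \<in> space P. Y0 \<omega> \<le> c} \<le> exp (- (1/c))"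
proof -
  define A where "A n = {\<omega> \<in> space P. X0 \<omega> \<le> real (Suc n) \<and> Y0 \<omega> \<le> c}" for n
  have "(\<lambda>n. measure P (A n)) \<longlonglongrightarrow> measure P (\<Union>n. A n)"
    by (rule P.finite_Lim_measure_incseq) (auto simp: A_def incseq_def)
  moreover have "(\<Union>n. A n) = {\<omega> \<in> space P. Y0 \<omega> \<le> c}"
  proof (intro equalityI subsetI)
    fix \<omega> assume "\<omega> \<in> (\<Union>n. A n)" then show "\<omega> \<in> {\<omega> \<in> space P. Y0 \<omega> \<le> c}" by (auto simp: A_def)
  next
    fix \<omega> assume w: "\<omega> \<in> {\<omega> \<in> space P. Y0 \<omega> \<le> c}"
    have "X0 \<omega> \<le> real (Suc (nat \<lceil>X0 \<omega>\<rceil>))" using real_nat_ceiling_ge[of "X0 \<omega>"] by linarith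
    then show "\<omega> \<in> (\<Union>n. A n)" using w by (auto simp: A_def)
  qed
  moreover have "measure P (A n) \<le> exp (- (1/c))" for n
  proof -
    have "measure P (A n) = exp (- (\<integral>s. max (f s / real (Suc n)) (g s / c) \<partial>M))"
      unfolding A_def using cdf c by auto
    also have "\<dots> \<le> exp (- (1/c))" using V_ge(2)[of "real (Suc n)" c] c by simp
    finally show ?thesis .
  qed
  ultimately show ?thesis by (metis LIMSEQ_le_const2)
qed

lemma PY0: "measure P {\<omega> \<in> space P. Y0 \<omega> \<le> 0} = 0"
proof (rule ccontr)
  define p where "p = measure P {\<omega> \<in> space P. Y0 \<omega> \<le> 0}"
  assume "measure P {\<omega> \<in> space P. Y0 \<omega> \<le> 0} \<noteq> 0"
  then have pp: "0 < p" using measure_nonneg[of P "{\<omega> \<in> space P. Y0 \<omega> \<le> 0}"] unfolding p_def by linarith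
  have "p \<le> measure P {\<omega> \<in> space P. Y0 \<omega> \<le> p}" unfolding p_def
    by (rule P.finite_measure_mono) (use pp in \<open>auto simp: p_def\<close>)
  also have "\<dots> \<le> exp (- (1/p))" using PY_le[OF pp] .
  also have "\<dots> \<le> 1 / (1 + 1/p)"
  proof -
    have "1 + 1/p \<le> exp (1/p)" by (rule exp_ge_add_one_self)
    then have "inverse (exp (1/p)) \<le> inverse (1 + 1/p)" using pp by (intro le_imp_inverse_le) (auto simp: add_pos_pos)
    then show ?thesis by (simp add: exp_minus divide_inverse)
  qed
  also have "\<dots> < p" using pp by (simp add: field_simps)
  finally show False by simp
qed

lemma expdecay: fixes c :: real assumes "0 < c" shows "(\<lambda>m::nat. exp(-(c*real(Suc m)))) \<longlonglongrightarrow> 0"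
proof -
  have n: "norm (exp (-c)) < 1" using assms by simp
  have eq: "(\<lambda>m::nat. exp(-(c*real(Suc m)))) = (\<lambda>m. (exp (-c))^(Suc m))"
    by (rule ext, subst exp_of_nat_mult[symmetric]) (simp add: algebra_simps)
  show ?thesis unfolding eq by (rule LIMSEQ_Suc[OF LIMSEQ_power_zero[OF n]])
qed

lemma bounds: assumes u: "0 \<le> u" and x: "1 < x" and a: "1 < a"
  shows "N (a*x) / (a * B x 1) * Phi u (a * B x 1 / x)
           \<le> measure P {\<omega> \<in> space P. x < max (X0 \<omega>) u / max (Y0 \<omega>) u}" (is "?L u \<le> ?P u")
    and "measure P {\<omega> \<in> space P. x < max (X0 \<omega>) u / max (Y0 \<omega>) u}
           \<le> a * N (x/a) / B x 1 * Phi u (B x 1 / (a * x))" (is "?P u \<le> ?U u")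
proof -
  have q: "x \<le> B x 1" using B_bounds[of x] x by auto
  have Nn: "0 \<le> N t" if "0 < t" for t using N_pos[OF that] by simp
  have "?L u \<le> ?P u \<and> ?P u \<le> ?U u"
  proof (cases "u = 0")
    case False
    then have u: "0 < u" using u by simp
    have e1: "Phi u (a * B x 1 / x) = 1 - exp (-(a * B x 1)/(x*u))"
      unfolding Phi_def using False by simp
    have e2: "Phi u (B x 1 / (a * x)) = 1 - exp (-(B x 1 / a)/(x*u))"
    proof -
      have "B x 1 / (a * x) / u = (B x 1 / a)/(x*u)" by simp
      then show ?thesis unfolding Phi_def using False by simp
    qed
    show ?thesis unfolding e1 e2 using lowerE[OF u x a] upperE[OF u x a] by simp
  next
    case True
    define E where "E w = {\<omega> \<in> space P. x < max (X0 \<omega>) w / max (Y0 \<omega>) w}" for w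
    have Em[measurable]: "E w \<in> sets P" for w unfolding E_def by measurable
    have sub1: "E w \<subseteq> E 0 \<union> {\<omega> \<in> space P. Y0 \<omega> \<le> 0}" if w: "0 < w" for w
    proof
      fix \<omega> assume e: "\<omega> \<in> E w"
      have mw: "0 < max (Y0 \<omega>) w" using w by simp
      have o: "\<omega> \<in> space P" "x * max (Y0 \<omega>) w < max (X0 \<omega>) w"
        using e mw by (simp_all add: E_def less_divide_eq mult.commute)
      have "x * w \<le> x * max (Y0 \<omega>) w" using x by simp
      moreover have "w < x * w" using x w by simp
      ultimately have X: "max (X0 \<omega>) w = X0 \<omega>" using o(2) unfolding max_def by (cases "X0 \<omega> \<le> w") auto
      have "x * Y0 \<omega> \<le> x * max (Y0 \<omega>) w" using x by (intro mult_left_mono) auto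
      then have XY: "x * Y0 \<omega> < X0 \<omega>" using o X by linarith
      show "\<omega> \<in> E 0 \<union> {\<omega> \<in> space P. Y0 \<omega> \<le> 0}"
      proof (cases "Y0 \<omega> \<le> 0")
        case False
        then have Yp: "0 < Y0 \<omega>" by simp
        then have "0 < x * Y0 \<omega>" using x by simp
        then have "0 < X0 \<omega>" using XY by linarith
        then have "max (X0 \<omega>) 0 = X0 \<omega>" "max (Y0 \<omega>) 0 = Y0 \<omega>" using Yp by auto
        moreover have "x < X0 \<omega> / Y0 \<omega>" using XY Yp by (simp add: less_divide_eq mult.commute)
        ultimately show ?thesis using o by (simp add: E_def)
      qed (use o in auto)
    qed
    have sub2: "E 0 \<subseteq> E w \<union> {\<omega> \<in> space P. X0 \<omega> \<le> x * w}" if w: "0 < w" for w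
    proof
      fix \<omega> assume e: "\<omega> \<in> E 0"
      then have o: "\<omega> \<in> space P" "x < max (X0 \<omega>) 0 / max (Y0 \<omega>) 0" by (auto simp: E_def)
      have Y: "0 < Y0 \<omega>"
      proof (rule ccontr)
        assume "\<not> 0 < Y0 \<omega>" then have "max (Y0 \<omega>) 0 = 0" by simp
        with o x show False by simp
      qed
      then have "max (Y0 \<omega>) 0 = Y0 \<omega>" by simp
      then have XY0: "x * Y0 \<omega> < max (X0 \<omega>) 0" using o Y by (simp add: less_divide_eq mult.commute)
      then have "0 < max (X0 \<omega>) 0" using x Y by (smt (verit) mult_pos_pos)
      then have XY: "x * Y0 \<omega> < X0 \<omega>" using XY0 by (simp add: max_def split: if_splits)
      show "\<omega> \<in> E w \<union> {\<omega> \<in> space P. X0 \<omega> \<le> x * w}"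
      proof (cases "X0 \<omega> \<le> x * w")
        case False
        have "w \<le> x * w" using x w by simp
        then have mx: "max (X0 \<omega>) w = X0 \<omega>" using False by simp
        have "x * max (Y0 \<omega>) w < X0 \<omega>" using False XY by (simp add: max_def)
        moreover have mw: "0 < max (Y0 \<omega>) w" using w by simp
        ultimately have "x < max (X0 \<omega>) w / max (Y0 \<omega>) w" unfolding mx by (simp add: less_divide_eq mult.commute)
        then show ?thesis using o by (simp add: E_def)
      qed (use o in auto)
    qed
    define lw where "lw m = N (a*x) / (a * B x 1) * (1 - exp (-(a * B x 1)/(x*(1/real (Suc m)))))" for m
    have lw_le: "lw m \<le> measure P (E 0)" for m
    proof -
      have w: "0 < 1 / real (Suc m)" by simp
      have "lw m \<le> measure P (E (1/real (Suc m)))" unfolding lw_def E_def by (rule lowerE[OF w x a])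
      also have "\<dots> \<le> measure P (E 0 \<union> {\<omega> \<in> space P. Y0 \<omega> \<le> 0})"
        by (rule P.finite_measure_mono[OF sub1[OF w]]) auto
      also have "\<dots> \<le> measure P (E 0) + measure P {\<omega> \<in> space P. Y0 \<omega> \<le> 0}"
        by (rule measure_subadditive) (auto simp: P.emeasure_eq_measure)
      finally show ?thesis using PY0 by simp
    qed
    have "(\<lambda>m. lw m) \<longlonglongrightarrow> N (a*x) / (a * B x 1) * (1 - 0)"
    proof -
      have "(\<lambda>m. exp(-((a * B x 1 / x)*real(Suc m)))) \<longlonglongrightarrow> 0"
        by (rule expdecay) (use a q x in auto)
      moreover have "exp(-((a * B x 1 / x)*real(Suc m))) = exp (-(a * B x 1)/(x*(1/real (Suc m))))" for m
      proof -
        have "(a * B x 1 / x)*real(Suc m) = (a * B x 1)/(x*(1/real (Suc m)))" by simp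
        then show ?thesis by (simp only: minus_divide_left)
      qed
      ultimately show ?thesis unfolding lw_def by (intro tendsto_intros) simp
    qed
    then have low: "?L u \<le> ?P u" using lw_le True unfolding Phi_def E_def
      by (simp add: LIMSEQ_le_const2)
    define uw where "uw m = a * N (x/a) / B x 1 + exp (-real (Suc m))" for m
    have uw_ge: "measure P (E 0) \<le> uw m" for m
    proof -
      define w where "w = 1 / (x * real (Suc m))"
      have w: "0 < w" using x by (simp add: w_def)
      have "measure P (E 0) \<le> measure P (E w \<union> {\<omega> \<in> space P. X0 \<omega> \<le> x * w})"
        by (rule P.finite_measure_mono[OF sub2[OF w]]) auto
      also have "\<dots> \<le> measure P (E w) + measure P {\<omega> \<in> space P. X0 \<omega> \<le> x * w}"
        by (rule measure_subadditive) (auto simp: P.emeasure_eq_measure)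
      also have "measure P (E w) \<le> a * N (x/a) / B x 1 * (1 - exp (-(B x 1 / a)/(x*w)))"
        unfolding E_def by (rule upperE[OF w x a])
      also have "\<dots> \<le> a * N (x/a) / B x 1"
      proof -
        have "0 \<le> a * N (x/a) / B x 1" using Nn[of "x/a"] a x q by simp
        moreover have "1 - exp (-(B x 1 / a)/(x*w)) \<le> 1" by simp
        ultimately show ?thesis using mult_left_le by blast
      qed
      also have "measure P {\<omega> \<in> space P. X0 \<omega> \<le> x * w} \<le> exp (- real (Suc m))"
        using PX_le[of "x*w"] w x by (simp add: w_def)
      finally show ?thesis unfolding uw_def by simp
    qed
    have "(\<lambda>m. uw m) \<longlonglongrightarrow> a * N (x/a) / B x 1 + 0"
      unfolding uw_def using expdecay[of 1] by (intro tendsto_intros) simp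
    then have up: "?P u \<le> ?U u" using uw_ge True unfolding Phi_def E_def
      by (simp add: LIMSEQ_le_const)
    show ?thesis using low up by simp
  qed
  then show "?L u \<le> ?P u" "?P u \<le> ?U u" by auto
qed

end

lemma squeeze_fam:
  fixes s :: "'a \<Rightarrow> real" and lo hi :: "real \<Rightarrow> 'a \<Rightarrow> real" and l h :: "real \<Rightarrow> real"
  assumes lo: "\<And>e. 0 < e \<Longrightarrow> e < 1 \<Longrightarrow> (lo e \<longlongrightarrow> l e) F"
    and hi: "\<And>e. 0 < e \<Longrightarrow> e < 1 \<Longrightarrow> (hi e \<longlongrightarrow> h e) F"
    and ev: "\<And>e. 0 < e \<Longrightarrow> e < 1 \<Longrightarrow> eventually (\<lambda>n. lo e n \<le> s n \<and> s n \<le> hi e n) F"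
    and l: "(l \<longlongrightarrow> L) (at_right 0)" and h: "(h \<longlongrightarrow> L) (at_right 0)"
  shows "(s \<longlongrightarrow> L) F"
proof (rule tendstoI)
  fix d :: real assume d: "0 < d"
  have d2: "0 < d/2" using d by simp
  have "eventually (\<lambda>e. dist (l e) L < d/2) (at_right (0::real))" using tendstoD[OF l d2] .
  moreover have "eventually (\<lambda>e. dist (h e) L < d/2) (at_right (0::real))" using tendstoD[OF h d2] .
  moreover have "eventually (\<lambda>e. e \<in> {0<..<1}) (at_right (0::real))"
    by (rule eventually_at_right_real) simp
  ultimately have "eventually (\<lambda>e. dist (l e) L < d/2 \<and> dist (h e) L < d/2 \<and> e \<in> {0<..<1}) (at_right (0::real))"
    by eventually_elim auto
  then obtain e where e: "dist (l e) L < d/2" "dist (h e) L < d/2" "0 < e" "e < 1"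
    using eventually_happens[of _ "at_right (0::real)"] by (auto simp: trivial_limit_at_right_real)
  have "eventually (\<lambda>n. dist (lo e n) (l e) < d/2) F" using tendstoD[OF lo[OF e(3,4)] d2] .
  moreover have "eventually (\<lambda>n. dist (hi e n) (h e) < d/2) F" using tendstoD[OF hi[OF e(3,4)] d2] .
  moreover note ev[OF e(3,4)]
  ultimately show "eventually (\<lambda>n. dist (s n) L < d) F"
  proof eventually_elim
    case (elim n)
    then show ?case using e by (auto simp: dist_real_def abs_if split: if_splits)
  qed
qed

locale rv = fg +
  fixes \<alpha> :: real
  assumes RV: "regularly_varying (- \<alpha>) (gam M f g)"
begin

abbreviation "G \<equiv> gam M f g"

lemma G_eq: "G t = N t / t" unfolding gam_def by simp

lemma G_pos: "0 < t \<Longrightarrow> 0 < G t" using N_pos unfolding G_eq by simp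

lemma RVN: assumes y: "0 < y" shows "((\<lambda>t. N (t*y) / N t) \<longlongrightarrow> y powr (1-\<alpha>)) at_top"
proof -
  have "((\<lambda>t. G (t*y) / G t) \<longlongrightarrow> y powr (-\<alpha>)) at_top" using RV y unfolding regularly_varying_def by auto
  then have "((\<lambda>t. y * (G (t*y) / G t)) \<longlongrightarrow> y * y powr (-\<alpha>)) at_top" by (rule tendsto_mult_left)
  moreover have "y * y powr (-\<alpha>) = y powr (1-\<alpha>)" using y by (simp add: powr_add[of y 1 "-\<alpha>", simplified] powr_one)
  ultimately have lim: "((\<lambda>t. y * (G (t*y) / G t)) \<longlongrightarrow> y powr (1-\<alpha>)) at_top" by simp
  have "eventually (\<lambda>t. y * (G (t*y) / G t) = N (t*y) / N t) at_top"
    using eventually_gt_at_top[of 0]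
  proof eventually_elim
    case (elim t)
    then have "N t \<noteq> 0" using N_pos[of t] by simp
    then show ?case using elim y unfolding G_eq by (simp add: field_simps)
  qed
  then show ?thesis by (rule Lim_transform_eventually[OF lim])
qed

lemma part_i: "(\<alpha> = 1 \<longleftrightarrow> slowly_varying N)"
proof
  assume "\<alpha> = 1"
  then show "slowly_varying N" unfolding slowly_varying_def regularly_varying_def
    using RVN by auto
next
  assume "slowly_varying N"
  then have A: "((\<lambda>t. N (t*2) / N t) \<longlongrightarrow> (2::real) powr 0) at_top"
    unfolding slowly_varying_def regularly_varying_def by auto
  have B: "((\<lambda>t. N (t*2) / N t) \<longlongrightarrow> (2::real) powr (1-\<alpha>)) at_top" using RVN by simp
  have "(2::real) powr (1-\<alpha>) = 2 powr 0"
    by (rule tendsto_unique[OF _ B A]) simp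
  then have "(2::real) powr (1-\<alpha>) = 1" by simp
  then show "\<alpha> = 1" by simp
qed

definition U :: "real \<Rightarrow> real" where "U t = 1 / G t"

lemma U_eq: "0 < t \<Longrightarrow> U t = t / N t" unfolding U_def G_eq by simp

lemma U_mono: assumes "0 < s" "s \<le> s'" shows "U s \<le> U s'"
proof -
  have "N s' \<le> N s" using N_antimono assms by simp
  moreover have "0 < N s'" using N_pos assms by simp
  ultimately show ?thesis using assms U_eq[of s] U_eq[of s'] by (simp add: frac_le)
qed

lemma U_ge: "0 < t \<Longrightarrow> t \<le> U t"
  using U_eq[of t] N_le1[of t] N_pos[of t] by (simp add: le_divide_eq mult_left_le)

abbreviation "gi c \<equiv> gen_inv U c"

lemma gen_inv_U: "gen_inv (\<lambda>t. 1 / gam M f g t) = gi" unfolding U_def[abs_def] by simp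

lemma gi_props:
  shows gi_above: "gi c < s \<Longrightarrow> c \<le> U s"
    and gi_below: "0 < s \<Longrightarrow> s < gi c \<Longrightarrow> U s < c"
    and gi_nonneg: "0 \<le> gi c"
proof -
  define S where "S = {s. 0 < s \<and> c \<le> U s}"
  have gi: "gi c = Inf S" unfolding gen_inv_def S_def by simp
  have ne: "S \<noteq> {}"
  proof -
    have "max c 1 \<in> S" unfolding S_def using U_ge[of "max c 1"] by auto
    then show ?thesis by auto
  qed
  have bdd: "bdd_below S" unfolding S_def by (auto intro: bdd_belowI[of _ 0])
  show "0 \<le> gi c" unfolding gi by (rule cInf_greatest[OF ne]) (auto simp: S_def)
  show "c \<le> U s" if lt: "gi c < s"
  proof -
    obtain s0 where "s0 \<in> S" "s0 < s" using lt cInf_less_iff[OF ne bdd, of s] unfolding gi by auto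
    then show ?thesis using U_mono[of s0 s] unfolding S_def by auto
  qed
  show "U s < c" if "0 < s" "s < gi c"
  proof (rule ccontr)
    assume "\<not> U s < c"
    then have "s \<in> S" using that unfolding S_def by auto
    then have "gi c \<le> s" unfolding gi by (rule cInf_lower[OF _ bdd])
    then show False using that by simp
  qed
qed

lemma gi_at_top: assumes c: "filterlim c at_top F" shows "filterlim (\<lambda>n. gi (c n)) at_top F"
  unfolding filterlim_at_top
proof
  fix Z :: real
  define T where "T = max Z 1"
  have "eventually (\<lambda>n. U T < c n) F" using c by (simp add: filterlim_at_top_dense)
  then show "eventually (\<lambda>n. Z \<le> gi (c n)) F"
  proof eventually_elim
    case (elim n)
    show ?case
    proof (rule ccontr)
      assume "\<not> Z \<le> gi (c n)"
      then have "gi (c n) < T" unfolding T_def by auto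
      then have "c n \<le> U T" by (rule gi_above)
      then show False using elim by simp
    qed
  qed
qed

lemma ratioU: assumes y: "filterlim y at_top F" and z: "0 < z"
  shows "((\<lambda>n. U (y n * z) / U (y n)) \<longlongrightarrow> z powr \<alpha>) F"
proof -
  have "((\<lambda>n. N (y n * z) / N (y n)) \<longlongrightarrow> z powr (1-\<alpha>)) F"
    using filterlim_compose[OF RVN[OF z] y] by simp
  then have "((\<lambda>n. z / (N (y n * z) / N (y n))) \<longlongrightarrow> z / z powr (1-\<alpha>)) F"
    using z by (intro tendsto_intros) auto
  moreover have "z / z powr (1-\<alpha>) = z powr \<alpha>" using z by (simp add: powr_diff powr_one)
  ultimately have lim: "((\<lambda>n. z / (N (y n * z) / N (y n))) \<longlongrightarrow> z powr \<alpha>) F" by simp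
  have "eventually (\<lambda>n. z / (N (y n * z) / N (y n)) = U (y n * z) / U (y n)) F"
    using filterlim_at_top_dense[THEN iffD1, OF y, rule_format, of 0]
  proof eventually_elim
    case (elim n)
    have yz: "0 < y n * z" using elim z by simp
    have "U (y n * z) / U (y n) = (y n * z / N (y n * z)) / (y n / N (y n))"
      using U_eq[OF elim] U_eq[OF yz] by simp
    then show ?case using z N_pos[OF elim] N_pos[OF yz] elim by (simp add: field_simps)
  qed
  then show ?thesis by (rule Lim_transform_eventually[OF lim])
qed

end

context rv begin

lemma inv_asym: assumes c: "filterlim c at_top F" shows "((\<lambda>n. c n * G (gi (c n))) \<longlongrightarrow> 1) F"
proof -
  define y where "y n = gi (c n)" for n
  have y: "filterlim y at_top F" unfolding y_def by (rule gi_at_top[OF c])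
  have ypos: "eventually (\<lambda>n. 0 < y n) F" using filterlim_at_top_dense[THEN iffD1, OF y, rule_format, of 0] .
  show ?thesis unfolding y_def[symmetric]
  proof (rule squeeze_fam[where lo="\<lambda>e n. U (y n * (1-e)) / U (y n)" and hi="\<lambda>e n. U (y n * (1+e)) / U (y n)"
        and l="\<lambda>e. (1-e) powr \<alpha>" and h="\<lambda>e. (1+e) powr \<alpha>"])
    fix e :: real assume e: "0 < e" "e < 1"
    show "((\<lambda>n. U (y n * (1-e)) / U (y n)) \<longlongrightarrow> (1-e) powr \<alpha>) F" by (rule ratioU[OF y]) (use e in auto)
    show "((\<lambda>n. U (y n * (1+e)) / U (y n)) \<longlongrightarrow> (1+e) powr \<alpha>) F" by (rule ratioU[OF y]) (use e in auto)
    show "eventually (\<lambda>n. U (y n * (1-e)) / U (y n) \<le> c n * G (y n) \<and> c n * G (y n) \<le> U (y n * (1+e)) / U (y n)) F"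
      using ypos
    proof eventually_elim
      case (elim n)
      have Up: "0 < U (y n)" using U_eq[OF elim] N_pos[OF elim] elim by simp
      have cG: "c n * G (y n) = c n / U (y n)" unfolding U_def by simp
      have "U (y n * (1-e)) < c n" unfolding y_def by (rule gi_below) (use e elim in \<open>auto simp: y_def\<close>)
      moreover have "c n \<le> U (y n * (1+e))" unfolding y_def by (rule gi_above) (use e elim in \<open>auto simp: y_def\<close>)
      ultimately show ?case unfolding cG using Up by (auto intro: divide_right_mono)
    qed
  next
    have "((\<lambda>e. (1-e) powr \<alpha>) \<longlongrightarrow> (1-0) powr \<alpha>) (at_right (0::real))"
      by (intro tendsto_powr tendsto_intros) auto
    then show "((\<lambda>e. (1-e) powr \<alpha>) \<longlongrightarrow> 1) (at_right (0::real))" by simp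
    have "((\<lambda>e. (1+e) powr \<alpha>) \<longlongrightarrow> (1+0) powr \<alpha>) (at_right (0::real))"
      by (intro tendsto_powr tendsto_intros) auto
    then show "((\<lambda>e. (1+e) powr \<alpha>) \<longlongrightarrow> 1) (at_right (0::real))" by simp
  qed
qed

lemma kappa_lim:
  assumes c: "filterlim c at_top F" and k: "\<kappa> \<sim>[F] (\<lambda>n. gi (c n))" and z: "0 < z"
  shows "((\<lambda>n. c n * G (\<kappa> n * z)) \<longlongrightarrow> z powr (-\<alpha>)) F" and "filterlim \<kappa> at_top F"
proof -
  define y where "y n = gi (c n)" for n
  have y: "filterlim y at_top F" unfolding y_def by (rule gi_at_top[OF c])
  have ypos: "eventually (\<lambda>n. 0 < y n) F" using filterlim_at_top_dense[THEN iffD1, OF y, rule_format, of 0] .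
  have r: "((\<lambda>n. \<kappa> n / y n) \<longlongrightarrow> 1) F"
    by (rule asymp_equivD_strong[OF k[folded y_def]]) (use ypos in \<open>auto elim: eventually_mono\<close>)
  have "filterlim (\<lambda>n. \<kappa> n / y n * y n) at_top F"
    by (rule filterlim_tendsto_pos_mult_at_top[OF r _ y]) simp
  moreover have "eventually (\<lambda>n. \<kappa> n / y n * y n = \<kappa> n) F" using ypos by eventually_elim auto
  ultimately show kt: "filterlim \<kappa> at_top F" using filterlim_cong[OF refl refl, of "\<lambda>n. \<kappa> n / y n * y n" \<kappa>] by blast
  have kpos: "eventually (\<lambda>n. 0 < \<kappa> n) F" using filterlim_at_top_dense[THEN iffD1, OF kt, rule_format, of 0] .
  have NR: "((\<lambda>n. N (\<kappa> n * z) / N (y n)) \<longlongrightarrow> z powr (1-\<alpha>)) F"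
  proof (rule squeeze_fam[where lo="\<lambda>e n. N (y n * (z*(1+e))) / N (y n)" and hi="\<lambda>e n. N (y n * (z*(1-e))) / N (y n)"
        and l="\<lambda>e. (z*(1+e)) powr (1-\<alpha>)" and h="\<lambda>e. (z*(1-e)) powr (1-\<alpha>)"])
    fix e :: real assume e: "0 < e" "e < 1"
    show "((\<lambda>n. N (y n * (z*(1+e))) / N (y n)) \<longlongrightarrow> (z*(1+e)) powr (1-\<alpha>)) F"
      using filterlim_compose[OF RVN y, of "z*(1+e)"] e z by simp
    show "((\<lambda>n. N (y n * (z*(1-e))) / N (y n)) \<longlongrightarrow> (z*(1-e)) powr (1-\<alpha>)) F"
      using filterlim_compose[OF RVN y, of "z*(1-e)"] e z by simp
    have "eventually (\<lambda>n. dist (\<kappa> n / y n) 1 < e) F" using tendstoD[OF r e(1)] .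
    then show "eventually (\<lambda>n. N (y n * (z*(1+e))) / N (y n) \<le> N (\<kappa> n * z) / N (y n) \<and>
        N (\<kappa> n * z) / N (y n) \<le> N (y n * (z*(1-e))) / N (y n)) F"
      using ypos kpos
    proof eventually_elim
      case (elim n)
      then have "\<kappa> n / y n < 1 + e" "1 - e < \<kappa> n / y n" by (auto simp: dist_real_def)
      then have k1: "\<kappa> n \<le> y n * (1+e)" "y n * (1-e) \<le> \<kappa> n" using elim by (auto simp: field_simps)
      have Np: "0 < N (y n)" using N_pos elim by simp
      have "N (y n * (z*(1+e))) \<le> N (\<kappa> n * z)"
        by (rule N_antimono) (use elim z k1 in \<open>auto simp: mult_right_mono\<close>)
      moreover have "N (\<kappa> n * z) \<le> N (y n * (z*(1-e)))"
        by (rule N_antimono) (use elim z e k1 in \<open>auto simp: mult_right_mono\<close>)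
      ultimately show ?case using Np by (auto intro: divide_right_mono)
    qed
  next
    have "((\<lambda>e. (z*(1+e)) powr (1-\<alpha>)) \<longlongrightarrow> (z*(1+0)) powr (1-\<alpha>)) (at_right (0::real))"
      using z by (intro tendsto_powr tendsto_intros) auto
    then show "((\<lambda>e. (z*(1+e)) powr (1-\<alpha>)) \<longlongrightarrow> z powr (1-\<alpha>)) (at_right (0::real))" by simp
    have "((\<lambda>e. (z*(1-e)) powr (1-\<alpha>)) \<longlongrightarrow> (z*(1-0)) powr (1-\<alpha>)) (at_right (0::real))"
      using z by (intro tendsto_powr tendsto_intros) auto
    then show "((\<lambda>e. (z*(1-e)) powr (1-\<alpha>)) \<longlongrightarrow> z powr (1-\<alpha>)) (at_right (0::real))" by simp
  qed
  have "((\<lambda>n. (c n * G (y n)) * (N (\<kappa> n * z) / N (y n)) * inverse ((\<kappa> n / y n) * z))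
      \<longlongrightarrow> 1 * z powr (1-\<alpha>) * inverse (1 * z)) F"
    using z by (intro tendsto_intros inv_asym[OF c, folded y_def] NR r) auto
  moreover have "1 * z powr (1-\<alpha>) * inverse (1 * z) = z powr (-\<alpha>)"
    using z by (simp add: powr_diff powr_one powr_minus divide_inverse)
  ultimately have lim: "((\<lambda>n. (c n * G (y n)) * (N (\<kappa> n * z) / N (y n)) * inverse ((\<kappa> n / y n) * z))
      \<longlongrightarrow> z powr (-\<alpha>)) F" by simp
  have "eventually (\<lambda>n. (c n * G (y n)) * (N (\<kappa> n * z) / N (y n)) * inverse ((\<kappa> n / y n) * z) = c n * G (\<kappa> n * z)) F"
    using ypos kpos
  proof eventually_elim
    case (elim n)
    have "0 < N (y n)" using N_pos elim by simp
    then show ?case using elim z unfolding G_eq by (simp add: field_simps)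
  qed
  then show "((\<lambda>n. c n * G (\<kappa> n * z)) \<longlongrightarrow> z powr (-\<alpha>)) F" by (rule Lim_transform_eventually[OF lim])
qed

end

lemma pow_limit: fixes t :: "nat \<Rightarrow> real"
  assumes t: "t \<longlonglongrightarrow> T" shows "(\<lambda>n. (1 - t n / real n)^n) \<longlonglongrightarrow> exp (-T)"
proof (rule squeeze_fam[where lo="\<lambda>e n. (1 - (T+e) / real n)^n" and hi="\<lambda>e n. (1 - (T-e) / real n)^n"
      and l="\<lambda>e. exp (-(T+e))" and h="\<lambda>e. exp (-(T-e))"])
  fix e :: real assume e: "0 < e" "e < 1"
  have "(\<lambda>n::nat. (1 - (T+e) / real n)^n) = (\<lambda>n. (1 + (-(T+e)) / real n)^n)"
    by (rule ext) (simp only: diff_conv_add_uminus minus_divide_left)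
  then show "(\<lambda>n. (1 - (T+e) / real n)^n) \<longlonglongrightarrow> exp (-(T+e))"
    using tendsto_exp_limit_sequentially[of "-(T+e)"] by simp
  have "(\<lambda>n::nat. (1 - (T-e) / real n)^n) = (\<lambda>n. (1 + (-(T-e)) / real n)^n)"
    by (rule ext) (simp only: diff_conv_add_uminus minus_divide_left)
  then show "(\<lambda>n. (1 - (T-e) / real n)^n) \<longlonglongrightarrow> exp (-(T-e))"
    using tendsto_exp_limit_sequentially[of "-(T-e)"] by simp
  have "eventually (\<lambda>n. dist (t n) T < e) sequentially" using tendstoD[OF t e(1)] .
  moreover have "eventually (\<lambda>n. nat \<lceil>T + e\<rceil> + 1 \<le> n) sequentially" by (rule eventually_ge_at_top)
  ultimately show "eventually (\<lambda>n. (1 - (T+e) / real n)^n \<le> (1 - t n / real n)^n \<and> (1 - t n / real n)^n \<le> (1 - (T-e) / real n)^n) sequentially"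
  proof eventually_elim
    case (elim n)
    have np: "0 < real n" using elim(2) by simp
    have "T + e \<le> real n" using elim(2) by linarith
    then have b0: "0 \<le> 1 - (T+e) / real n" using np by (simp add: field_simps)
    have tt: "T - e \<le> t n" "t n \<le> T + e" using elim(1) by (auto simp: dist_real_def)
    have b1: "1 - (T+e) / real n \<le> 1 - t n / real n" using tt np by (simp add: divide_right_mono)
    have b2: "1 - t n / real n \<le> 1 - (T-e) / real n" using tt np by (simp add: divide_right_mono)
    show ?case using b0 b1 b2 by (auto intro: power_mono)
  qed
next
  have "((\<lambda>e. exp (-(T+e))) \<longlongrightarrow> exp (-(T+0))) (at_right (0::real))"
    by (intro tendsto_intros)
  then show "((\<lambda>e. exp (-(T+e))) \<longlongrightarrow> exp (-T)) (at_right 0)" by simp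
  have "((\<lambda>e. exp (-(T-e))) \<longlongrightarrow> exp (-(T-0))) (at_right (0::real))"
    by (intro tendsto_intros)
  then show "((\<lambda>e. exp (-(T-e))) \<longlongrightarrow> exp (-T)) (at_right 0)" by simp
qed

lemma prod_bounds: fixes p :: "nat \<Rightarrow> real"
  assumes "\<forall>i\<in>{1..n}. lo / real n \<le> p i \<and> p i \<le> hi / real n" "\<forall>i. p i \<le> 1" "hi / real n \<le> 1"
  shows "(1 - hi / real n)^n \<le> (\<Prod>i\<in>{1..n}. 1 - p i)" "(\<Prod>i\<in>{1..n}. 1 - p i) \<le> (1 - lo / real n)^n"
proof -
  have "(\<Prod>i\<in>{1..n}. 1 - hi / real n) \<le> (\<Prod>i\<in>{1..n}. 1 - p i)"
    by (rule prod_mono) (use assms in auto)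
  then show "(1 - hi / real n)^n \<le> (\<Prod>i\<in>{1..n}. 1 - p i)" by simp
  have "(\<Prod>i\<in>{1..n}. 1 - p i) \<le> (\<Prod>i\<in>{1..n}. 1 - lo / real n)"
    by (rule prod_mono) (use assms in auto)
  then show "(\<Prod>i\<in>{1..n}. 1 - p i) \<le> (1 - lo / real n)^n" by simp
qed

lemma Phi_mono: assumes "0 \<le> u" "c \<le> c'" shows "Phi u c \<le> Phi u c'"
  using assms by (auto simp: Phi_def divide_right_mono)

lemma Phi_nonneg: assumes "0 \<le> u" "0 \<le> c" shows "0 \<le> Phi u c"
  using assms by (auto simp: Phi_def)

lemma Cconst_Phi: "Cconst u = Phi u 1" unfolding Cconst_def Phi_def by simp

lemma Cconst_pos: "0 \<le> u \<Longrightarrow> 0 < Cconst u" unfolding Cconst_def by auto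

context pr begin

interpretation P: prob_space P by (rule P)

lemma PX0: "measure P {\<omega> \<in> space P. X0 \<omega> \<le> 0} = 0"
proof (rule ccontr)
  define p where "p = measure P {\<omega> \<in> space P. X0 \<omega> \<le> 0}"
  assume "measure P {\<omega> \<in> space P. X0 \<omega> \<le> 0} \<noteq> 0"
  then have pp: "0 < p" using measure_nonneg[of P "{\<omega> \<in> space P. X0 \<omega> \<le> 0}"] unfolding p_def by linarith
  have "p \<le> measure P {\<omega> \<in> space P. X0 \<omega> \<le> p}" unfolding p_def
    by (rule P.finite_measure_mono) (use pp in \<open>auto simp: p_def\<close>)
  also have "\<dots> \<le> exp (- (1/p))" using PX_le[OF pp] .
  also have "\<dots> \<le> 1 / (1 + 1/p)"
  proof -
    have "1 + 1/p \<le> exp (1/p)" by (rule exp_ge_add_one_self)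
    then have "inverse (exp (1/p)) \<le> inverse (1 + 1/p)" using pp by (intro le_imp_inverse_le) (auto simp: add_pos_pos)
    then show ?thesis by (simp add: exp_minus divide_inverse)
  qed
  also have "\<dots> < p" using pp by (simp add: field_simps)
  finally show False by simp
qed

lemma tail_bounds: assumes u: "0 \<le> u" and x: "1 < x" and a: "1 < a" and xa: "1/(a-1) \<le> x"
  shows "Cconst u * N (x*a) / (a*(x+1)) \<le> measure P {\<omega> \<in> space P. x < max (X0 \<omega>) u / max (Y0 \<omega>) u}"
    and "measure P {\<omega> \<in> space P. x < max (X0 \<omega>) u / max (Y0 \<omega>) u} \<le> Cconst u * a * N (x*(1/a)) / x"
proof -
  have q: "x \<le> B x 1" "B x 1 \<le> x + 1" using B_bounds[of x] x by auto
  have N1: "0 \<le> N (a*x)" using N_pos[of "a*x"] a x by simp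
  have N2: "0 \<le> N (x/a)" using N_pos[of "x/a"] a x by simp
  have C: "0 \<le> Phi u 1" using Phi_nonneg[OF u] by simp
  have "Cconst u * N (x*a) / (a*(x+1)) = N (a*x) / (a * (x+1)) * Phi u 1"
    unfolding Cconst_Phi by (simp add: mult.commute)
  also have "\<dots> \<le> N (a*x) / (a * B x 1) * Phi u (a * B x 1 / x)"
  proof (rule mult_mono)
    show "N (a*x) / (a * (x+1)) \<le> N (a*x) / (a * B x 1)"
      using q a x N1 by (intro divide_left_mono) auto
    have "1 \<le> a * B x 1 / x" using q a x by (simp add: le_divide_eq) (smt (verit) mult_le_cancel_right1)
    then show "Phi u 1 \<le> Phi u (a * B x 1 / x)" by (rule Phi_mono[OF u])
    show "0 \<le> N (a*x) / (a * B x 1)" using N1 a q x by simp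
  qed (use C in auto)
  also have "\<dots> \<le> measure P {\<omega> \<in> space P. x < max (X0 \<omega>) u / max (Y0 \<omega>) u}"
    by (rule bounds(1)[OF u x a])
  finally show "Cconst u * N (x*a) / (a*(x+1)) \<le> measure P {\<omega> \<in> space P. x < max (X0 \<omega>) u / max (Y0 \<omega>) u}" .
  have "measure P {\<omega> \<in> space P. x < max (X0 \<omega>) u / max (Y0 \<omega>) u} \<le> a * N (x/a) / B x 1 * Phi u (B x 1 / (a * x))"
    by (rule bounds(2)[OF u x a])
  also have "\<dots> \<le> a * N (x/a) / x * Phi u 1"
  proof (rule mult_mono)
    show "a * N (x/a) / B x 1 \<le> a * N (x/a) / x"
      using q a x N2 by (intro divide_left_mono) auto
    have "1 \<le> (a-1) * x" using xa a by (simp add: field_simps)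
    then have "B x 1 \<le> a * x" using q by (simp add: algebra_simps)
    then have "B x 1 / (a * x) \<le> 1" using a x by simp
    then show "Phi u (B x 1 / (a * x)) \<le> Phi u 1" by (rule Phi_mono[OF u])
    show "0 \<le> a * N (x/a) / x" using N2 a x by simp
    show "0 \<le> Phi u (B x 1 / (a * x))" using q a x by (intro Phi_nonneg[OF u]) simp
  qed
  also have "\<dots> = Cconst u * a * N (x*(1/a)) / x" unfolding Cconst_Phi by simp
  finally show "measure P {\<omega> \<in> space P. x < max (X0 \<omega>) u / max (Y0 \<omega>) u} \<le> Cconst u * a * N (x*(1/a)) / x" .
qed

end

locale full = rv M f g \<alpha> for M :: "'s measure" and f g \<alpha> +
  fixes P :: "'w measure" and X Y :: "nat \<Rightarrow> 'w \<Rightarrow> real"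
  assumes P: "prob_space P"
    and XYm: "\<forall>i. X i \<in> borel_measurable P \<and> Y i \<in> borel_measurable P"
    and ind: "prob_space.indep_vars P (\<lambda>_. borel) (\<lambda>i \<omega>. (X i \<omega>, Y i \<omega>)) UNIV"
    and cdfs: "\<forall>i x y. 0 < x \<longrightarrow> 0 < y \<longrightarrow>
           measure P {\<omega> \<in> space P. X i \<omega> \<le> x \<and> Y i \<omega> \<le> y}
             = exp (- integral\<^sup>L M (\<lambda>s. max (f s / x) (g s / y)))"
begin

interpretation P: prob_space P by (rule P)

lemma Xm[measurable]: "X i \<in> borel_measurable P" and Ym[measurable]: "Y i \<in> borel_measurable P"
  using XYm by auto

lemma pri: "pr M f g P (X i) (Y i)"
  unfolding pr_def pr_axioms_def using fg_axioms P XYm cdfs by auto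

lemma prod_eq: assumes n: "1 \<le> n"
  shows "measure P {\<omega> \<in> space P. \<forall>i\<in>{1..n}. max (X i \<omega>) u / max (Y i \<omega>) u \<le> c}
    = (\<Prod>i\<in>{1..n}. 1 - measure P {\<omega> \<in> space P. c < max (X i \<omega>) u / max (Y i \<omega>) u})"
proof -
  define A where "A = {p \<in> space (borel :: (real \<times> real) measure). max (fst p) u / max (snd p) u \<le> c}"
  have fm: "(\<lambda>p::real\<times>real. fst p) \<in> borel_measurable borel"
    by (intro borel_measurable_continuous_onI continuous_intros)
  have sm: "(\<lambda>p::real\<times>real. snd p) \<in> borel_measurable borel"
    by (intro borel_measurable_continuous_onI continuous_intros)
  have "(\<lambda>p::real\<times>real. max (fst p) u / max (snd p) u) \<in> borel_measurable borel"
    using fm sm by (intro borel_measurable_divide borel_measurable_max) auto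
  then have A: "A \<in> sets borel" unfolding A_def by measurable
  have pre: "(\<lambda>\<omega>. (X i \<omega>, Y i \<omega>)) -` A \<inter> space P = {\<omega> \<in> space P. max (X i \<omega>) u / max (Y i \<omega>) u \<le> c}" for i
    unfolding A_def by auto
  have "P.prob (\<Inter>i\<in>{1..n}. (\<lambda>\<omega>. (X i \<omega>, Y i \<omega>)) -` A \<inter> space P)
      = (\<Prod>i\<in>{1..n}. P.prob ((\<lambda>\<omega>. (X i \<omega>, Y i \<omega>)) -` A \<inter> space P))"
    using P.indep_varsD[OF ind, of "{1..n}" "\<lambda>_. A"] n A by simp
  moreover have "(\<Inter>i\<in>{1..n}. (\<lambda>\<omega>. (X i \<omega>, Y i \<omega>)) -` A \<inter> space P)
     = {\<omega> \<in> space P. \<forall>i\<in>{1..n}. max (X i \<omega>) u / max (Y i \<omega>) u \<le> c}"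
    unfolding pre using n by auto
  moreover have "P.prob {\<omega> \<in> space P. max (X i \<omega>) u / max (Y i \<omega>) u \<le> c}
      = 1 - measure P {\<omega> \<in> space P. c < max (X i \<omega>) u / max (Y i \<omega>) u}" for i
  proof -
    have "{\<omega> \<in> space P. max (X i \<omega>) u / max (Y i \<omega>) u \<le> c}
        = space P - {\<omega> \<in> space P. c < max (X i \<omega>) u / max (Y i \<omega>) u}" by auto
    then show ?thesis by (simp add: P.prob_compl)
  qed
  ultimately show ?thesis unfolding pre by simp
qed

lemma event_eq: assumes n: "1 \<le> n" and k: "0 < k"
  shows "{\<omega> \<in> space P. max_ratio X Y u n \<omega> / k \<le> z} = {\<omega> \<in> space P. \<forall>i\<in>{1..n}. max (X i \<omega>) u / max (Y i \<omega>) u \<le> z * k}"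
proof -
  have "max_ratio X Y u n \<omega> / k \<le> z \<longleftrightarrow> (\<forall>i\<in>{1..n}. max (X i \<omega>) u / max (Y i \<omega>) u \<le> z * k)" for \<omega>
  proof -
    have "max_ratio X Y u n \<omega> / k \<le> z \<longleftrightarrow> max_ratio X Y u n \<omega> \<le> z * k" using k by (simp add: divide_le_eq)
    also have "\<dots> \<longleftrightarrow> (\<forall>i\<in>{1..n}. max (X i \<omega>) u / max (Y i \<omega>) u \<le> z * k)"
      unfolding max_ratio_def using n by (subst Max_le_iff) auto
    finally show ?thesis .
  qed
  then show ?thesis by auto
qed

end

context full begin

interpretation P: prob_space P by (rule P)

lemma main_conv:
  assumes u: "\<And>n. 0 \<le> u n" and kt: "filterlim \<kappa> at_top sequentially" and z: "0 < z"
    and Lim: "(\<lambda>n. real n * Cconst (u n) * G (\<kappa> n * z)) \<longlonglongrightarrow> z powr (-\<alpha>)"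
  shows "(\<lambda>n. measure P {\<omega> \<in> space P. max_ratio X Y (u n) n \<omega> / \<kappa> n \<le> z}) \<longlonglongrightarrow> exp (- (z powr (-\<alpha>)))"
proof -
  define L where "L = z powr (-\<alpha>)"
  define x where "x n = \<kappa> n * z" for n
  define Ln where "Ln n = real n * Cconst (u n) * G (x n)" for n
  have Ln: "Ln \<longlonglongrightarrow> L" using Lim unfolding Ln_def x_def L_def .
  have xt: "filterlim x at_top sequentially" unfolding x_def
    using filterlim_tendsto_pos_mult_at_top[OF tendsto_const z kt] by (simp add: mult.commute)
  define loE where "loE e n = Ln n * (N (x n * (1+e)) / N (x n)) * (x n / ((1+e) * (x n + 1)))" for e n
  define hiE where "hiE e n = Ln n * (1+e) * (N (x n * (1/(1+e))) / N (x n))" for e n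
  define ll where "ll e = L * (1+e) powr (1-\<alpha>) * (1/(1+e))" for e :: real
  define hh where "hh e = L * (1+e) * (1/(1+e)) powr (1-\<alpha>)" for e :: real
  have xx1: "(\<lambda>n. x n / (x n + 1)) \<longlonglongrightarrow> 1"
  proof -
    have "(\<lambda>n. inverse (x n)) \<longlonglongrightarrow> 0" by (rule tendsto_inverse_0_at_top[OF xt])
    then have "(\<lambda>n. 1 / (1 + inverse (x n))) \<longlonglongrightarrow> 1 / (1 + 0)" by (intro tendsto_intros) auto
    moreover have "eventually (\<lambda>n. 1 / (1 + inverse (x n)) = x n / (x n + 1)) sequentially"
      using filterlim_at_top_dense[THEN iffD1, OF xt, rule_format, of 0]
      by eventually_elim (simp add: field_simps)
    ultimately show ?thesis using Lim_transform_eventually by fastforce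
  qed
  have loE_lim: "loE e \<longlonglongrightarrow> ll e" if e: "0 < e" for e
  proof -
    have A: "(\<lambda>n. N (x n * (1+e)) / N (x n)) \<longlonglongrightarrow> (1+e) powr (1-\<alpha>)"
      using filterlim_compose[OF RVN xt, of "1+e"] e by simp
    have B: "(\<lambda>n. x n / ((1+e) * (x n + 1))) \<longlonglongrightarrow> 1 / (1+e)"
    proof -
      have "(\<lambda>n. (x n / (x n + 1)) / (1+e)) \<longlonglongrightarrow> 1 / (1+e)" using xx1 e by (intro tendsto_intros) auto
      then show ?thesis by (simp add: field_simps)
    qed
    show ?thesis unfolding loE_def[abs_def] ll_def by (rule tendsto_mult[OF tendsto_mult[OF Ln A] B])
  qed
  have hiE_lim: "hiE e \<longlonglongrightarrow> hh e" if e: "0 < e" for e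
  proof -
    have A: "(\<lambda>n. N (x n * (1/(1+e))) / N (x n)) \<longlonglongrightarrow> (1/(1+e)) powr (1-\<alpha>)"
      using filterlim_compose[OF RVN xt, of "1/(1+e)"] e by simp
    show ?thesis unfolding hiE_def[abs_def] hh_def by (rule tendsto_mult[OF tendsto_mult[OF Ln tendsto_const] A])
  qed
  show ?thesis unfolding L_def[symmetric]
  proof (rule squeeze_fam[where lo="\<lambda>e n. (1 - hiE e n / real n)^n" and hi="\<lambda>e n. (1 - loE e n / real n)^n"
        and l="\<lambda>e. exp (- hh e)" and h="\<lambda>e. exp (- ll e)"])
    fix e :: real assume e: "0 < e" "e < 1"
    show "(\<lambda>n. (1 - hiE e n / real n)^n) \<longlonglongrightarrow> exp (- hh e)" by (rule pow_limit[OF hiE_lim[OF e(1)]])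
    show "(\<lambda>n. (1 - loE e n / real n)^n) \<longlonglongrightarrow> exp (- ll e)" by (rule pow_limit[OF loE_lim[OF e(1)]])
    have ev1: "eventually (\<lambda>n. hiE e n < hh e + 1) sequentially"
      using order_tendstoD(2)[OF hiE_lim[OF e(1)], of "hh e + 1"] by simp
    have ev2: "eventually (\<lambda>n. nat \<lceil>hh e + 1\<rceil> + 1 \<le> n) sequentially" by (rule eventually_ge_at_top)
    have ev3: "eventually (\<lambda>n. max 1 (1/e) < x n) sequentially"
      using filterlim_at_top_dense[THEN iffD1, OF xt, rule_format, of "max 1 (1/e)"] .
    have ev4: "eventually (\<lambda>n. 0 < \<kappa> n) sequentially"
      using filterlim_at_top_dense[THEN iffD1, OF kt, rule_format, of 0] .
    show "eventually (\<lambda>n. (1 - hiE e n / real n)^n \<le> measure P {\<omega> \<in> space P. max_ratio X Y (u n) n \<omega> / \<kappa> n \<le> z}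
        \<and> measure P {\<omega> \<in> space P. max_ratio X Y (u n) n \<omega> / \<kappa> n \<le> z} \<le> (1 - loE e n / real n)^n) sequentially"
      using ev1 ev2 ev3 ev4
    proof eventually_elim
      case (elim n)
      have n1: "1 \<le> n" using elim(2) by simp
      have np: "0 < real n" using n1 by simp
      have x1: "1 < x n" and xe: "1/((1+e)-1) \<le> x n" using elim(3) by auto
      have xp: "0 < x n" using x1 by simp
      have Nx: "0 < N (x n)" using N_pos xp by simp
      have Cn: "0 < Cconst (u n)" using Cconst_pos u by simp
      define p where "p i = measure P {\<omega> \<in> space P. x n < max (X i \<omega>) (u n) / max (Y i \<omega>) (u n)}" for i
      have meq: "measure P {\<omega> \<in> space P. max_ratio X Y (u n) n \<omega> / \<kappa> n \<le> z} = (\<Prod>i\<in>{1..n}. 1 - p i)"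
        unfolding event_eq[OF n1 elim(4)] p_def x_def using prod_eq[OF n1] by (simp add: mult.commute)
      define NA where "NA = N (x n * (1+e))"
      define NB where "NB = N (x n * (1/(1+e)))"
      define NX where "NX = N (x n)"
      have NX: "0 < NX" using Nx unfolding NX_def .
      have lo_eq: "loE e n / real n = Cconst (u n) * N (x n * (1+e)) / ((1+e) * (x n + 1))"
      proof -
        define D where "D = (1+e) * (x n + 1)"
        have d: "0 < D" using xp e unfolding D_def by simp
        show ?thesis
          unfolding loE_def Ln_def G_eq NA_def[symmetric] NX_def[symmetric] D_def[symmetric]
          using np xp NX d by (simp add: field_simps)
      qed
      have hi_eq: "hiE e n / real n = Cconst (u n) * (1+e) * N (x n * (1/(1+e))) / x n"
        unfolding hiE_def Ln_def G_eq NB_def[symmetric] NX_def[symmetric] using np xp NX e by (simp add: field_simps)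
      have pb: "\<forall>i\<in>{1..n}. loE e n / real n \<le> p i \<and> p i \<le> hiE e n / real n"
      proof
        fix i assume "i \<in> {1..n}"
        have "1 < 1 + e" using e by simp
        from pr.tail_bounds[OF pri u x1 this xe]
        show "loE e n / real n \<le> p i \<and> p i \<le> hiE e n / real n"
          unfolding lo_eq hi_eq p_def by (simp add: mult.commute mult.left_commute)
      qed
      have p1: "\<forall>i. p i \<le> 1" unfolding p_def by (simp add: P.prob_le_1)
      have "hiE e n \<le> real n" using elim(1,2) by linarith
      then have h1: "hiE e n / real n \<le> 1" using np by simp
      show ?case unfolding meq using prod_bounds[OF pb p1 h1] by simp
    qed
  next
    have "((\<lambda>e. exp (- hh e)) \<longlongrightarrow> exp (- (L * (1+0) * (1/(1+0)) powr (1-\<alpha>)))) (at_right (0::real))"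
      unfolding hh_def by (intro tendsto_intros) auto
    then show "((\<lambda>e. exp (- hh e)) \<longlongrightarrow> exp (- L)) (at_right 0)" by simp
    have "((\<lambda>e. exp (- ll e)) \<longlongrightarrow> exp (- (L * (1+0) powr (1-\<alpha>) * (1/(1+0))))) (at_right (0::real))"
      unfolding ll_def by (intro tendsto_intros) auto
    then show "((\<lambda>e. exp (- ll e)) \<longlongrightarrow> exp (- L)) (at_right 0)" by simp
  qed
qed

end

lemma uC_lim: assumes un: "filterlim un at_top sequentially"
  shows "(\<lambda>n. un n * Cconst (un n)) \<longlonglongrightarrow> 1"
proof (rule tendsto_sandwich[where f="\<lambda>n. un n / (un n + 1)" and h="\<lambda>n. 1"])
  have ev: "eventually (\<lambda>n. 0 < un n) sequentially"
    using filterlim_at_top_dense[THEN iffD1, OF un, rule_format, of 0] .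
  then show "eventually (\<lambda>n. un n / (un n + 1) \<le> un n * Cconst (un n)) sequentially"
  proof eventually_elim
    case (elim n)
    define v where "v = un n"
    have v: "0 < v" using elim unfolding v_def .
    have "1 + 1/v \<le> exp (1/v)" by (rule exp_ge_add_one_self)
    then have "inverse (exp (1/v)) \<le> inverse (1 + 1/v)" using v by (intro le_imp_inverse_le) (auto simp: add_pos_pos)
    then have "exp (-(1/v)) \<le> v / (v + 1)" using v by (simp add: exp_minus field_simps)
    then have "1/(v+1) \<le> 1 - exp (-(1/v))" using v by (simp add: field_simps)
    then have "v * (1/(v+1)) \<le> v * (1 - exp (-(1/v)))" using v by (intro mult_left_mono) auto
    then show ?case using v unfolding v_def[symmetric] Cconst_def by simp
  qed
  show "eventually (\<lambda>n. un n * Cconst (un n) \<le> 1) sequentially" using ev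
  proof eventually_elim
    case (elim n)
    define v where "v = un n"
    have v: "0 < v" using elim unfolding v_def .
    have "1 + (-(1/v)) \<le> exp (-(1/v))" by (rule exp_ge_add_one_self)
    then have "1 - exp (-(1/v)) \<le> 1/v" by simp
    then have "v * (1 - exp (-(1/v))) \<le> v * (1/v)" using v by (intro mult_left_mono) auto
    then show ?case using v unfolding v_def[symmetric] Cconst_def by simp
  qed
  show "(\<lambda>n. 1) \<longlonglongrightarrow> (1::real)" by simp
  have "(\<lambda>n. inverse (un n)) \<longlonglongrightarrow> 0" by (rule tendsto_inverse_0_at_top[OF un])
  then have "(\<lambda>n. 1 / (1 + inverse (un n))) \<longlonglongrightarrow> 1 / (1 + 0)" by (intro tendsto_intros) auto
  moreover have "eventually (\<lambda>n. 1 / (1 + inverse (un n)) = un n / (un n + 1)) sequentially"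
    using ev by eventually_elim (simp add: field_simps)
  ultimately show "(\<lambda>n. un n / (un n + 1)) \<longlonglongrightarrow> 1" using Lim_transform_eventually by fastforce
qed

lemma ratio_at_top: assumes pos: "\<forall>n. 0 < un n" and o: "un \<in> o(\<lambda>n. real n)"
  shows "filterlim (\<lambda>n. real n / un n) at_top sequentially"
proof -
  have "(\<lambda>n. un n / real n) \<longlonglongrightarrow> 0" using smalloD_tendsto[OF o] .
  moreover have "eventually (\<lambda>n. 0 < un n / real n) sequentially"
    using eventually_gt_at_top[of 0] by eventually_elim (use pos in auto)
  ultimately have "filterlim (\<lambda>n. inverse (un n / real n)) at_top sequentially"
    by (rule filterlim_inverse_at_top)
  then show ?thesis by simp
qed

context full begin

interpretation P: prob_space P by (rule P)

lemma zneg: assumes u: "\<And>n. 0 \<le> u n" and kt: "filterlim \<kappa> at_top sequentially" and z: "z \<le> 0"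
  shows "(\<lambda>n. measure P {\<omega> \<in> space P. max_ratio X Y (u n) n \<omega> / \<kappa> n \<le> z}) \<longlonglongrightarrow> 0"
proof -
  have ev4: "eventually (\<lambda>n. 0 < \<kappa> n) sequentially"
    using filterlim_at_top_dense[THEN iffD1, OF kt, rule_format, of 0] .
  have "eventually (\<lambda>n. 0 = measure P {\<omega> \<in> space P. max_ratio X Y (u n) n \<omega> / \<kappa> n \<le> z}) sequentially"
    using ev4 eventually_ge_at_top[of 1]
  proof eventually_elim
    case (elim n)
    have sub: "{\<omega> \<in> space P. max_ratio X Y (u n) n \<omega> / \<kappa> n \<le> z}
        \<subseteq> {\<omega> \<in> space P. X 1 \<omega> \<le> 0} \<union> {\<omega> \<in> space P. Y 1 \<omega> \<le> 0}"
    proof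
      fix \<omega> assume "\<omega> \<in> {\<omega> \<in> space P. max_ratio X Y (u n) n \<omega> / \<kappa> n \<le> z}"
      then have w: "\<omega> \<in> space P" "max (X 1 \<omega>) (u n) / max (Y 1 \<omega>) (u n) \<le> z * \<kappa> n"
        unfolding event_eq[OF elim(2) elim(1)] using elim(2) by auto
      have "z * \<kappa> n \<le> 0" using z elim(1) by (simp add: mult_nonpos_nonneg)
      show "\<omega> \<in> {\<omega> \<in> space P. X 1 \<omega> \<le> 0} \<union> {\<omega> \<in> space P. Y 1 \<omega> \<le> 0}"
      proof (rule ccontr)
        assume "\<omega> \<notin> {\<omega> \<in> space P. X 1 \<omega> \<le> 0} \<union> {\<omega> \<in> space P. Y 1 \<omega> \<le> 0}"
        then have "0 < X 1 \<omega>" "0 < Y 1 \<omega>" using w by auto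
        then have "0 < max (X 1 \<omega>) (u n)" "0 < max (Y 1 \<omega>) (u n)" by auto
        then have "0 < max (X 1 \<omega>) (u n) / max (Y 1 \<omega>) (u n)" by simp
        then show False using w \<open>z * \<kappa> n \<le> 0\<close> by linarith
      qed
    qed
    have "measure P {\<omega> \<in> space P. max_ratio X Y (u n) n \<omega> / \<kappa> n \<le> z}
        \<le> measure P ({\<omega> \<in> space P. X 1 \<omega> \<le> 0} \<union> {\<omega> \<in> space P. Y 1 \<omega> \<le> 0})"
      by (rule P.finite_measure_mono[OF sub]) auto
    also have "\<dots> \<le> measure P {\<omega> \<in> space P. X 1 \<omega> \<le> 0} + measure P {\<omega> \<in> space P. Y 1 \<omega> \<le> 0}"
      by (rule measure_subadditive) (auto simp: P.emeasure_eq_measure)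
    also have "\<dots> = 0" using pr.PX0[OF pri] pr.PY0[OF pri] by simp
    finally show ?case using measure_nonneg[of P] by (simp add: order_antisym)
  qed
  then show ?thesis by (rule Lim_transform_eventually[OF tendsto_const])
qed

lemma part_ii: assumes u: "0 \<le> u" and k: "\<kappa> \<sim>[sequentially] (\<lambda>n. gi (Cconst u * real n))"
  shows "(\<lambda>n. measure P {\<omega> \<in> space P. max_ratio X Y u n \<omega> / \<kappa> n \<le> z}) \<longlonglongrightarrow> frechet_cdf \<alpha> z"
proof -
  have c: "filterlim (\<lambda>n. Cconst u * real n) at_top sequentially"
    by (rule filterlim_tendsto_pos_mult_at_top[OF tendsto_const Cconst_pos[OF u] filterlim_real_sequentially])
  note kl = kappa_lim[OF c k]
  have kt: "filterlim \<kappa> at_top sequentially" using kl(2)[of 1] by simp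
  show ?thesis
  proof (cases "0 < z")
    case True
    have "(\<lambda>n. real n * Cconst u * G (\<kappa> n * z)) \<longlonglongrightarrow> z powr (-\<alpha>)"
      using kl(1)[OF True] by (simp add: mult.commute)
    from main_conv[of "\<lambda>_. u", OF u kt True this] show ?thesis using True unfolding frechet_cdf_def by simp
  next
    case False
    from zneg[of "\<lambda>_. u", OF u kt] False show ?thesis unfolding frechet_cdf_def by simp
  qed
qed

lemma part_iii: assumes pos: "\<forall>n. 0 < un n" and ut: "filterlim un at_top sequentially"
    and o: "un \<in> o(\<lambda>n. real n)" and k: "\<kappa> \<sim>[sequentially] (\<lambda>n. gi (real n / un n))"
  shows "(\<lambda>n. measure P {\<omega> \<in> space P. max_ratio X Y (un n) n \<omega> / \<kappa> n \<le> z}) \<longlonglongrightarrow> frechet_cdf \<alpha> z"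
proof -
  have c: "filterlim (\<lambda>n. real n / un n) at_top sequentially" by (rule ratio_at_top[OF pos o])
  note kl = kappa_lim[OF c k]
  have kt: "filterlim \<kappa> at_top sequentially" using kl(2)[of 1] by simp
  have u: "0 \<le> un n" for n using pos by (simp add: less_imp_le)
  show ?thesis
  proof (cases "0 < z")
    case True
    have "(\<lambda>n. (real n / un n * G (\<kappa> n * z)) * (un n * Cconst (un n))) \<longlonglongrightarrow> z powr (-\<alpha>) * 1"
      by (rule tendsto_mult[OF kl(1)[OF True] uC_lim[OF ut]])
    moreover have "(real n / un n * G (\<kappa> n * z)) * (un n * Cconst (un n)) = real n * Cconst (un n) * G (\<kappa> n * z)" for n
      using pos[rule_format, of n] by (simp add: field_simps)
    ultimately have "(\<lambda>n. real n * Cconst (un n) * G (\<kappa> n * z)) \<longlonglongrightarrow> z powr (-\<alpha>)" by simp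
    from main_conv[OF u kt True this] show ?thesis using True unfolding frechet_cdf_def by simp
  next
    case False
    from zneg[OF u kt] False show ?thesis unfolding frechet_cdf_def by simp
  qed
qed

end

theorem corollary2:
  fixes M :: "'s measure" and f g :: "'s \<Rightarrow> real"
    and P :: "'w measure" and X Y :: "nat \<Rightarrow> 'w \<Rightarrow> real" and \<alpha> :: real
  assumes "sigma_finite_measure M"
    and "f \<in> borel_measurable M" and "g \<in> borel_measurable M"
    and "\<forall>s\<in>space M. 0 \<le> f s" and "\<forall>s\<in>space M. 0 \<le> g s"
    and "integrable M f" and "integrable M g"
    and "integral\<^sup>L M f = 1" and "integral\<^sup>L M g = 1"
    and "prob_space P"
    and "\<forall>i. X i \<in> borel_measurable P \<and> Y i \<in> borel_measurable P"
    and "prob_space.indep_vars P (\<lambda>_. borel) (\<lambda>i \<omega>. (X i \<omega>, Y i \<omega>)) UNIV"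
    and "\<forall>i x y. 0 < x \<longrightarrow> 0 < y \<longrightarrow>
           measure P {\<omega> \<in> space P. X i \<omega> \<le> x \<and> Y i \<omega> \<le> y}
             = exp (- integral\<^sup>L M (\<lambda>s. max (f s / x) (g s / y)))"
    and "\<forall>t>0. 0 < emeasure M (Eset M f g t)"
    and "regularly_varying (- \<alpha>) (gam M f g)"
  shows "(\<alpha> = 1 \<longleftrightarrow> slowly_varying (normE M f g))
    \<and> (\<forall>u \<kappa>. 0 \<le> u \<longrightarrow>
          \<kappa> \<sim>[sequentially] (\<lambda>n. gen_inv (\<lambda>t. 1 / gam M f g t) (Cconst u * real n)) \<longrightarrow>
          (\<forall>z. (\<lambda>n. measure P {\<omega> \<in> space P. max_ratio X Y u n \<omega> / \<kappa> n \<le> z})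
                 \<longlonglongrightarrow> frechet_cdf \<alpha> z))
    \<and> (\<forall>un \<kappa>. (\<forall>n. 0 < un n) \<longrightarrow> filterlim un at_top sequentially \<longrightarrow>
          un \<in> o(\<lambda>n. real n) \<longrightarrow>
          \<kappa> \<sim>[sequentially] (\<lambda>n. gen_inv (\<lambda>t. 1 / gam M f g t) (real n / un n)) \<longrightarrow>
          (\<forall>z. (\<lambda>n. measure P {\<omega> \<in> space P. max_ratio X Y (un n) n \<omega> / \<kappa> n \<le> z})
                 \<longlonglongrightarrow> frechet_cdf \<alpha> z))"
proof -
  interpret full M f g \<alpha> P X Y
    using assms unfolding full_def full_axioms_def rv_def rv_axioms_def fg_def by auto
  show ?thesis unfolding gen_inv_U
    using part_i part_ii part_iii by auto
qed

end
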